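(* For every scoring function $S$ and every integer $n\ge2$, $$\lambda_n(S)\le\lambda(S)\le\lambda_n(S)+c_n\|S\|_\delta\frac{\sqrt{\ln n}}{\sqrt n}+\frac{2\|S\|_\infty}{n},\qquad c_n=\sqrt{\frac{2\ln3+2\ln(n+2)}{\ln n}}.$$
   Context: Let $\mathcal{A}$ be a finite alphabet and $\mathcal{A}^*=\mathcal{A}\cup\{G\}$, where $G$ is a gap symbol. A scoring function is a symmetric map $S:\mathcal{A}^*\times\mathcal{A}^*\to\mathbb{R}$; $\|S\|_\delta=\max_{c,d,e\in\mathcal{A}^*}|S(c,d)-S(c,e)|$ and $\|S\|_\infty=\max_{c,d\in\mathcal{A}^*}|S(c,d)|$. For strings $x=x_1\dots x_m$, $y=y_1\dots y_{m'}$ over $\mathcal{A}$, an alignment $\pi$ is a sequence $((\mu_1,\nu_1),\dots,(\mu_k,\nu_k))$, $k\ge0$, with $1\le\mu_1<\dots<\mu_k\le m$ and $1\le\nu_1<\dots<\nu_k\le m'$; its score is $S_\pi(x,y)=\sum_{i=1}^k S(x_{\mu_i},y_{\nu_i})+\sum_{j\notin\{\mu_i\}}S(x_j,G)+\sum_{j\notin\{\nu_i\}}S(G,y_j)$, and $L_S(x,y)=\max_\pi S_\pi(x,y)$. Let $X_1,X_2,\dots,Y_1,Y_2,\dots$ be i.i.d. letters in $\mathcal{A}$. Put $L_n(S)=L_S(X_1\dots X_n,Y_1\dots Y_n)$, $\lambda_n(S)=E[L_n(S)]/n$ and $\lambda(S)=\lim_{n\to\infty}\lambda_n(S)$ (which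 exists). *)

theory Defs
  imports "HOL-Probability.Probability"
begin

text \<open>Extended alphabet with gap symbol G: 'a option, where
  None plays the role of the gap symbol G.
  Strings are lists; positions are 0-based internally.\<close>

definition delta_norm :: "('a::finite option \<Rightarrow> 'a option \<Rightarrow> real) \<Rightarrow> real" where
  "delta_norm S = Max {\<bar>S c d - S c e\<bar> | c d e. True}"

definition sup_norm :: "('a::finite option \<Rightarrow> 'a option \<Rightarrow> real) \<Rightarrow> real" where
  "sup_norm S = Max {\<bar>S c d\<bar> | c d. True}"

definition alignments :: "nat \<Rightarrow> nat \<Rightarrow> (nat \<times> nat) list set" where
  "alignments m m' = {\<pi>. sorted_wrt (\<lambda>(a, b) (c, d). a < c \<and> b < d) \<pi> \<and>
                         (\<forall>(a, b) \<in> set \<pi>. a < m \<and> b < m')}"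

definition align_score ::
  "('a option \<Rightarrow> 'a option \<Rightarrow> real) \<Rightarrow> (nat \<times> nat) list \<Rightarrow> 'a list \<Rightarrow> 'a list \<Rightarrow> real" where
  "align_score S \<pi> x y =
     (\<Sum>(i, j) \<leftarrow> \<pi>. S (Some (x ! i)) (Some (y ! j)))
     + (\<Sum>j \<in> {..<length x} - fst ` set \<pi>. S (Some (x ! j)) None)
     + (\<Sum>j \<in> {..<length y} - snd ` set \<pi>. S None (Some (y ! j)))"

definition opt_score :: "('a option \<Rightarrow> 'a option \<Rightarrow> real) \<Rightarrow> 'a list \<Rightarrow> 'a list \<Rightarrow> real" where
  "opt_score S x y = Max ((\<lambda>\<pi>. align_score S \<pi> x y) ` alignments (length x) (length y))"

definition lambda_n :: "'a pmf \<Rightarrow> ('a option \<Rightarrow> 'a option \<Rightarrow> real) \<Rightarrow> nat \<Rightarrow> real" where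
  "lambda_n p S n =
     measure_pmf.expectation (pair_pmf (replicate_pmf n p) (replicate_pmf n p))
       (\<lambda>(x, y). opt_score S x y) / real n"

definition lambda_lim :: "'a pmf \<Rightarrow> ('a option \<Rightarrow> 'a option \<Rightarrow> real) \<Rightarrow> real" where
  "lambda_lim p S = lim (\<lambda>n. lambda_n p S n)"

end

theory Submission
  imports Defs
begin

definition ordp :: "nat \<times> nat \<Rightarrow> nat \<times> nat \<Rightarrow> bool" where
  "ordp = (\<lambda>(a, b) (c, d). a < c \<and> b < d)"

lemma alignments_iff:
  "\<pi> \<in> alignments m m' \<longleftrightarrow> sorted_wrt ordp \<pi> \<and> (\<forall>(a, b) \<in> set \<pi>. a < m \<and> b < m')"
  by (simp add: alignments_def ordp_def)

lemma sorted_ordp_distinct: "sorted_wrt ordp \<pi> \<Longrightarrow> distinct \<pi>"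
  by (induction \<pi>) (auto simp: ordp_def)

lemma sorted_ordp_distinct_fst: "sorted_wrt ordp \<pi> \<Longrightarrow> distinct (map fst \<pi>)"
  by (induction \<pi>) (auto simp: ordp_def)

lemma sorted_ordp_distinct_snd: "sorted_wrt ordp \<pi> \<Longrightarrow> distinct (map snd \<pi>)"
  by (induction \<pi>) (auto simp: ordp_def)

lemma finite_alignments: "finite (alignments m m')"
proof -
  have "alignments m m' \<subseteq> {xs. set xs \<subseteq> {..<m} \<times> {..<m'} \<and> length xs \<le> m * m'}"
  proof
    fix \<pi> assume h: "\<pi> \<in> alignments m m'"
    hence s: "set \<pi> \<subseteq> {..<m} \<times> {..<m'}" by (auto simp: alignments_iff)
    have "distinct \<pi>" using h by (auto simp: alignments_iff intro: sorted_ordp_distinct)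
    hence "length \<pi> = card (set \<pi>)" by (simp add: distinct_card)
    also have "\<dots> \<le> card ({..<m} \<times> {..<m'})" by (rule card_mono) (use s in auto)
    finally show "\<pi> \<in> {xs. set xs \<subseteq> {..<m} \<times> {..<m'} \<and> length xs \<le> m * m'}"
      using s by (simp add: card_cartesian_product)
  qed
  moreover have "finite {xs. set xs \<subseteq> {..<m} \<times> {..<m'} \<and> length xs \<le> m * m'}"
    by (rule finite_lists_length_le) auto
  ultimately show ?thesis by (rule finite_subset)
qed

lemma Nil_alignments: "[] \<in> alignments m m'"
  by (simp add: alignments_def)

lemma opt_score_ge:
  "\<pi> \<in> alignments (length x) (length y) \<Longrightarrow> align_score S \<pi> x y \<le> opt_score S x y"
  unfolding opt_score_def by (rule Max_ge) (auto intro: finite_alignments)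

lemma opt_score_obtain:
  obtains \<pi> where "\<pi> \<in> alignments (length x) (length y)" "opt_score S x y = align_score S \<pi> x y"
proof -
  have "opt_score S x y \<in> (\<lambda>\<pi>. align_score S \<pi> x y) ` alignments (length x) (length y)"
    unfolding opt_score_def by (rule Max_in) (auto intro: finite_alignments Nil_alignments)
  thus ?thesis using that by auto
qed

definition shiftp :: "nat \<Rightarrow> nat \<Rightarrow> (nat \<times> nat) list \<Rightarrow> (nat \<times> nat) list" where
  "shiftp i j \<pi> = map (\<lambda>(a, b). (a + i, b + j)) \<pi>"

lemma gap_split:
  fixes g :: "nat \<Rightarrow> real"
  assumes "F1 \<subseteq> {..<m1}" "F2 \<subseteq> {..<m2}"
  shows "(\<Sum>j\<in>{..<m1+m2} - (F1 \<union> (\<lambda>a. a + m1) ` F2). g j)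
       = (\<Sum>j\<in>{..<m1} - F1. g j) + (\<Sum>j\<in>{..<m2} - F2. g (j + m1))"
proof -
  have eq: "{..<m1+m2} - (F1 \<union> (\<lambda>a. a + m1) ` F2) = ({..<m1} - F1) \<union> (\<lambda>a. a + m1) ` ({..<m2} - F2)"
  proof (intro set_eqI iffI)
    fix j assume j: "j \<in> {..<m1+m2} - (F1 \<union> (\<lambda>a. a + m1) ` F2)"
    show "j \<in> ({..<m1} - F1) \<union> (\<lambda>a. a + m1) ` ({..<m2} - F2)"
    proof (cases "j < m1")
      case True thus ?thesis using j by auto
    next
      case False
      hence "j = (j - m1) + m1" by simp
      moreover have "j - m1 \<in> {..<m2} - F2" using j False
        by (auto simp: image_iff)
      ultimately show ?thesis by blast
    qed
  next
    fix j assume "j \<in> ({..<m1} - F1) \<union> (\<lambda>a. a + m1) ` ({..<m2} - F2)"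
    thus "j \<in> {..<m1+m2} - (F1 \<union> (\<lambda>a. a + m1) ` F2)" using assms by auto
  qed
  show ?thesis unfolding eq
    by (subst sum.union_disjoint) (auto simp: sum.reindex)
qed

lemma concat_alignment:
  assumes p1: "\<pi>1 \<in> alignments (length x1) (length y1)"
      and p2: "\<pi>2 \<in> alignments (length x2) (length y2)"
  shows "\<pi>1 @ shiftp (length x1) (length y1) \<pi>2 \<in> alignments (length (x1 @ x2)) (length (y1 @ y2))"
    and "align_score S (\<pi>1 @ shiftp (length x1) (length y1) \<pi>2) (x1 @ x2) (y1 @ y2)
          = align_score S \<pi>1 x1 y1 + align_score S \<pi>2 x2 y2"
proof -
  let ?m1 = "length x1" and ?n1 = "length y1"
  show "\<pi>1 @ shiftp ?m1 ?n1 \<pi>2 \<in> alignments (length (x1 @ x2)) (length (y1 @ y2))"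
    using p1 p2 unfolding alignments_iff shiftp_def
    by (auto simp: sorted_wrt_append sorted_wrt_map ordp_def elim!: sorted_wrt_mono_rel[rotated])
  have pairs: "(\<Sum>(i, j) \<leftarrow> \<pi>1 @ shiftp ?m1 ?n1 \<pi>2. S (Some ((x1@x2) ! i)) (Some ((y1@y2) ! j)))
     = (\<Sum>(i, j) \<leftarrow> \<pi>1. S (Some (x1 ! i)) (Some (y1 ! j))) + (\<Sum>(i, j) \<leftarrow> \<pi>2. S (Some (x2 ! i)) (Some (y2 ! j)))"
  proof -
    have a: "map (\<lambda>(i, j). S (Some ((x1@x2) ! i)) (Some ((y1@y2) ! j))) \<pi>1
          = map (\<lambda>(i, j). S (Some (x1 ! i)) (Some (y1 ! j))) \<pi>1"
      using p1 by (auto simp: alignments_iff nth_append intro!: map_cong)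
    have b: "map (\<lambda>(i, j). S (Some ((x1@x2) ! i)) (Some ((y1@y2) ! j))) (shiftp ?m1 ?n1 \<pi>2)
          = map (\<lambda>(i, j). S (Some (x2 ! i)) (Some (y2 ! j))) \<pi>2"
      by (auto simp: shiftp_def nth_append intro!: map_cong)
    show ?thesis by (simp only: map_append sum_list_append a b)
  qed
  have f: "fst ` set (\<pi>1 @ shiftp ?m1 ?n1 \<pi>2) = fst ` set \<pi>1 \<union> (\<lambda>a. a + ?m1) ` (fst ` set \<pi>2)"
    by (force simp: shiftp_def image_iff)
  have s: "snd ` set (\<pi>1 @ shiftp ?m1 ?n1 \<pi>2) = snd ` set \<pi>1 \<union> (\<lambda>a. a + ?n1) ` (snd ` set \<pi>2)"
    by (force simp: shiftp_def image_iff)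
  have gx: "(\<Sum>j\<in>{..<length (x1@x2)} - fst ` set (\<pi>1 @ shiftp ?m1 ?n1 \<pi>2). S (Some ((x1@x2) ! j)) None)
     = (\<Sum>j\<in>{..<?m1} - fst ` set \<pi>1. S (Some (x1 ! j)) None) + (\<Sum>j\<in>{..<length x2} - fst ` set \<pi>2. S (Some (x2 ! j)) None)"
  proof -
    have "(\<Sum>j\<in>{..<length (x1@x2)} - fst ` set (\<pi>1 @ shiftp ?m1 ?n1 \<pi>2). S (Some ((x1@x2) ! j)) None)
      = (\<Sum>j\<in>{..<?m1} - fst ` set \<pi>1. S (Some ((x1@x2) ! j)) None) + (\<Sum>j\<in>{..<length x2} - fst ` set \<pi>2. S (Some ((x1@x2) ! (j + ?m1))) None)"
    proof -
      have "fst ` set \<pi>1 \<subseteq> {..<length x1}" "fst ` set \<pi>2 \<subseteq> {..<length x2}"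
        using p1 p2 by (auto simp: alignments_iff)
      thus ?thesis unfolding f length_append by (rule gap_split)
    qed
    also have "(\<Sum>j\<in>{..<?m1} - fst ` set \<pi>1. S (Some ((x1@x2) ! j)) None) = (\<Sum>j\<in>{..<?m1} - fst ` set \<pi>1. S (Some (x1 ! j)) None)"
      by (rule sum.cong) (auto simp: nth_append)
    also have "(\<Sum>j\<in>{..<length x2} - fst ` set \<pi>2. S (Some ((x1@x2) ! (j + ?m1))) None) = (\<Sum>j\<in>{..<length x2} - fst ` set \<pi>2. S (Some (x2 ! j)) None)"
      by (rule sum.cong) (auto simp: nth_append)
    finally show ?thesis .
  qed
  have gy: "(\<Sum>j\<in>{..<length (y1@y2)} - snd ` set (\<pi>1 @ shiftp ?m1 ?n1 \<pi>2). S None (Some ((y1@y2) ! j)))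
     = (\<Sum>j\<in>{..<?n1} - snd ` set \<pi>1. S None (Some (y1 ! j))) + (\<Sum>j\<in>{..<length y2} - snd ` set \<pi>2. S None (Some (y2 ! j)))"
  proof -
    have "(\<Sum>j\<in>{..<length (y1@y2)} - snd ` set (\<pi>1 @ shiftp ?m1 ?n1 \<pi>2). S None (Some ((y1@y2) ! j)))
      = (\<Sum>j\<in>{..<?n1} - snd ` set \<pi>1. S None (Some ((y1@y2) ! j))) + (\<Sum>j\<in>{..<length y2} - snd ` set \<pi>2. S None (Some ((y1@y2) ! (j + ?n1))))"
    proof -
      have "snd ` set \<pi>1 \<subseteq> {..<length y1}" "snd ` set \<pi>2 \<subseteq> {..<length y2}"
        using p1 p2 by (auto simp: alignments_iff)
      thus ?thesis unfolding s length_append by (rule gap_split)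
    qed
    also have "(\<Sum>j\<in>{..<?n1} - snd ` set \<pi>1. S None (Some ((y1@y2) ! j))) = (\<Sum>j\<in>{..<?n1} - snd ` set \<pi>1. S None (Some (y1 ! j)))"
      by (rule sum.cong) (auto simp: nth_append)
    also have "(\<Sum>j\<in>{..<length y2} - snd ` set \<pi>2. S None (Some ((y1@y2) ! (j + ?n1)))) = (\<Sum>j\<in>{..<length y2} - snd ` set \<pi>2. S None (Some (y2 ! j)))"
      by (rule sum.cong) (auto simp: nth_append)
    finally show ?thesis .
  qed
  show "align_score S (\<pi>1 @ shiftp ?m1 ?n1 \<pi>2) (x1 @ x2) (y1 @ y2)
          = align_score S \<pi>1 x1 y1 + align_score S \<pi>2 x2 y2"
    unfolding align_score_def pairs gx gy by simp
qed


lemma filter_split_sorted: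
  "sorted_wrt ordp \<pi> \<Longrightarrow> filter (\<lambda>u. fst u < i) \<pi> @ filter (\<lambda>u. \<not> fst u < i) \<pi> = \<pi>"
proof (induction \<pi>)
  case Nil thus ?case by simp
next
  case (Cons u \<pi>)
  show ?case
  proof (cases "fst u < i")
    case True thus ?thesis using Cons by simp
  next
    case False
    have "\<forall>v\<in>set \<pi>. \<not> fst v < i" using Cons.prems False by (auto simp: ordp_def)
    hence "filter (\<lambda>u. fst u < i) \<pi> = []" "filter (\<lambda>u. \<not> fst u < i) \<pi> = \<pi>" by auto
    thus ?thesis using False by simp
  qed
qed

lemma split_alignment:
  assumes pi: "\<pi> \<in> alignments (length x) (length y)" and i: "i \<le> length x" and j: "j \<le> length y"
      and cut: "\<forall>(a, b) \<in> set \<pi>. (a < i \<and> b < j) \<or> (i \<le> a \<and> j \<le> b)"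
  obtains \<pi>1 \<pi>2 where "\<pi>1 \<in> alignments i j" "\<pi>2 \<in> alignments (length x - i) (length y - j)"
    "align_score S \<pi> x y = align_score S \<pi>1 (take i x) (take j y) + align_score S \<pi>2 (drop i x) (drop j y)"
    "set \<pi>1 = {u \<in> set \<pi>. fst u < i}"
    "set \<pi>2 = (\<lambda>(a, b). (a - i, b - j)) ` {u \<in> set \<pi>. \<not> fst u < i}"
proof -
  define \<pi>1 where "\<pi>1 = filter (\<lambda>u. fst u < i) \<pi>"
  define \<pi>2 where "\<pi>2 = map (\<lambda>(a, b). (a - i, b - j)) (filter (\<lambda>u. \<not> fst u < i) \<pi>)"
  have sorted: "sorted_wrt ordp \<pi>" using pi by (simp add: alignments_iff)
  have p1: "\<pi>1 \<in> alignments (length (take i x)) (length (take j y))"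
    using pi cut i j unfolding \<pi>1_def alignments_iff by (auto simp: sorted_wrt_filter min_def)
  have p2: "\<pi>2 \<in> alignments (length (drop i x)) (length (drop j y))"
  proof -
    have ge: "\<And>a b. (a, b) \<in> set \<pi> \<Longrightarrow> \<not> a < i \<Longrightarrow> i \<le> a \<and> j \<le> b"
      using cut by fastforce
    have s1: "sorted_wrt ordp (filter (\<lambda>u. \<not> fst u < i) \<pi>)"
      by (rule sorted_wrt_filter) (rule sorted)
    have "sorted_wrt ordp \<pi>2" unfolding \<pi>2_def
    proof (rule sorted_wrt_map_mono[OF s1])
      fix u v assume "u \<in> set (filter (\<lambda>u. \<not> fst u < i) \<pi>)" "v \<in> set (filter (\<lambda>u. \<not> fst u < i) \<pi>)" "ordp u v"
      thus "ordp ((\<lambda>(a, b). (a - i, b - j)) u) ((\<lambda>(a, b). (a - i, b - j)) v)"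
        using ge[of "fst u" "snd u"] ge[of "fst v" "snd v"] by (auto simp: ordp_def split: prod.splits)
    qed
    moreover have "\<forall>(a, b) \<in> set \<pi>2. a < length (drop i x) \<and> b < length (drop j y)"
    proof (clarify)
      fix a b assume "(a, b) \<in> set \<pi>2"
      then obtain a' b' where "(a', b') \<in> set \<pi>" "\<not> a' < i" "a = a' - i" "b = b' - j"
        unfolding \<pi>2_def by auto
      moreover have "a' < length x \<and> b' < length y" using pi calculation(1) by (auto simp: alignments_iff)
      ultimately show "a < length (drop i x) \<and> b < length (drop j y)" using ge by fastforce
    qed
    ultimately show ?thesis by (simp add: alignments_iff)
  qed
  have sh: "shiftp i j \<pi>2 = filter (\<lambda>u. \<not> fst u < i) \<pi>"
    unfolding \<pi>2_def shiftp_def map_map using cut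
    by (intro map_idI) auto
  have eq: "\<pi>1 @ shiftp (length (take i x)) (length (take j y)) \<pi>2 = \<pi>"
    using i j sh filter_split_sorted[OF sorted, of i] by (simp add: \<pi>1_def min_def)
  have "align_score S \<pi> x y = align_score S (\<pi>1 @ shiftp (length (take i x)) (length (take j y)) \<pi>2) (take i x @ drop i x) (take j y @ drop j y)"
    using eq by simp
  also have "\<dots> = align_score S \<pi>1 (take i x) (take j y) + align_score S \<pi>2 (drop i x) (drop j y)"
    by (rule concat_alignment(2)[OF p1 p2])
  finally have sc: "align_score S \<pi> x y = align_score S \<pi>1 (take i x) (take j y) + align_score S \<pi>2 (drop i x) (drop j y)" .
  show ?thesis
    apply (rule that[OF _ _ sc])
    using p1 p2 i j by (auto simp: \<pi>1_def \<pi>2_def min_absorb2)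
qed

lemma split_opt:
  assumes pi: "\<pi> \<in> alignments (length x) (length y)" and i: "i \<le> length x" and j: "j \<le> length y"
      and cut: "\<forall>(a, b) \<in> set \<pi>. (a < i \<and> b < j) \<or> (i \<le> a \<and> j \<le> b)"
  shows "align_score S \<pi> x y \<le> opt_score S (take i x) (take j y) + opt_score S (drop i x) (drop j y)"
proof -
  obtain \<pi>1 \<pi>2 where "\<pi>1 \<in> alignments i j" "\<pi>2 \<in> alignments (length x - i) (length y - j)"
    "align_score S \<pi> x y = align_score S \<pi>1 (take i x) (take j y) + align_score S \<pi>2 (drop i x) (drop j y)"
    using split_alignment[OF assms] by metis
  moreover have "align_score S \<pi>1 (take i x) (take j y) \<le> opt_score S (take i x) (take j y)"
    by (rule opt_score_ge) (use calculation i j in \<open>auto simp: min_def\<close>)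
  moreover have "align_score S \<pi>2 (drop i x) (drop j y) \<le> opt_score S (drop i x) (drop j y)"
    by (rule opt_score_ge) (use calculation in auto)
  ultimately show ?thesis by linarith
qed

lemma superadd_opt:
  "opt_score S x1 y1 + opt_score S x2 y2 \<le> opt_score S (x1 @ x2) (y1 @ y2)"
proof -
  obtain \<pi>1 where p1: "\<pi>1 \<in> alignments (length x1) (length y1)" "opt_score S x1 y1 = align_score S \<pi>1 x1 y1"
    by (rule opt_score_obtain)
  obtain \<pi>2 where p2: "\<pi>2 \<in> alignments (length x2) (length y2)" "opt_score S x2 y2 = align_score S \<pi>2 x2 y2"
    by (rule opt_score_obtain)
  show ?thesis
    using opt_score_ge[OF concat_alignment(1)[OF p1(1) p2(1)], of S] concat_alignment(2)[OF p1(1) p2(1), of S] p1 p2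
    by simp
qed

lemma sorted_ordp_cases:
  "sorted_wrt ordp \<pi> \<Longrightarrow> u \<in> set \<pi> \<Longrightarrow> v \<in> set \<pi> \<Longrightarrow> u = v \<or> ordp u v \<or> ordp v u"
  by (induction \<pi>) auto


lemma cut_exists:
  assumes pi: "\<pi> \<in> alignments P Q" and t: "t \<le> P + Q"
      and nj: "\<forall>(a, b) \<in> set \<pi>. a + b + 1 \<noteq> t"
  shows "\<exists>i j. i + j = t \<and> i \<le> P \<and> j \<le> Q \<and> (\<forall>(a, b) \<in> set \<pi>. (a < i \<and> b < j) \<or> (i \<le> a \<and> j \<le> b))"
proof -
  have sorted: "sorted_wrt ordp \<pi>" and bnd: "\<forall>(a, b) \<in> set \<pi>. a < P \<and> b < Q"
    using pi by (auto simp: alignments_iff)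
  have comp: "\<And>a b c d. (a, b) \<in> set \<pi> \<Longrightarrow> (c, d) \<in> set \<pi> \<Longrightarrow> (a = c \<and> b = d) \<or> (a < c \<and> b < d) \<or> (c < a \<and> d < b)"
    using sorted_ordp_cases[OF sorted] unfolding ordp_def by fastforce
  define L1 where "L1 = (\<lambda>(a, b). int a + 1) ` {(a, b) \<in> set \<pi>. a + b + 1 < t}"
  define L2 where "L2 = (\<lambda>(a, b). int t - int b) ` {(a, b) \<in> set \<pi>. a + b + 1 > t}"
  define L where "L = {0, int t - int Q} \<union> L1 \<union> L2"
  have f1: "finite {(a, b) \<in> set \<pi>. a + b + 1 < t}" "finite {(a, b) \<in> set \<pi>. a + b + 1 > t}"
    by (auto intro: rev_finite_subset[of "set \<pi>"])
  have finL: "finite L" unfolding L_def L1_def L2_def using f1 by blast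
  define i0 where "i0 = Max L"
  have i0_ge: "l \<le> i0" if "l \<in> L" for l using finL that unfolding i0_def by simp
  have i0_in: "i0 \<in> L" using finL unfolding i0_def L_def by (intro Max_in) auto
  have le_all: "l \<le> int P \<and> l \<le> int t \<and> (\<forall>(a, b) \<in> set \<pi>. a + b + 1 < t \<longrightarrow> l \<le> int t - int b - 1)
               \<and> (\<forall>(a, b) \<in> set \<pi>. a + b + 1 > t \<longrightarrow> l \<le> int a)" if lL: "l \<in> L" for l
  proof -
    consider "l = 0" | "l = int t - int Q" | "l \<in> L1" | "l \<in> L2" using lL unfolding L_def by auto
    thus ?thesis
    proof cases
      case 1 thus ?thesis by auto
    next
      case 2 thus ?thesis using t bnd by fastforce
    next
      case 3
      then obtain a b where ab: "(a, b) \<in> set \<pi>" "a + b + 1 < t" "l = int a + 1" unfolding L1_def by auto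
      have "\<forall>(c, d) \<in> set \<pi>. c + d + 1 < t \<longrightarrow> l \<le> int t - int d - 1"
        using comp[OF ab(1)] ab by fastforce
      moreover have "\<forall>(c, d) \<in> set \<pi>. c + d + 1 > t \<longrightarrow> l \<le> int c"
        using comp[OF ab(1)] ab by fastforce
      ultimately show ?thesis using ab bnd by fastforce
    next
      case 4
      then obtain a b where ab: "(a, b) \<in> set \<pi>" "a + b + 1 > t" "l = int t - int b" unfolding L2_def by auto
      have "\<forall>(c, d) \<in> set \<pi>. c + d + 1 < t \<longrightarrow> l \<le> int t - int d - 1"
        using comp[OF ab(1)] ab by fastforce
      moreover have "\<forall>(c, d) \<in> set \<pi>. c + d + 1 > t \<longrightarrow> l \<le> int c"
        using comp[OF ab(1)] ab by fastforce
      ultimately show ?thesis using ab bnd by fastforce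
    qed
  qed
  have i0_nn: "0 \<le> i0" using i0_ge[of 0] by (simp add: L_def)
  define i where "i = nat i0"
  define j where "j = t - i"
  have i_le: "i \<le> P" "i \<le> t" using le_all[OF i0_in] i0_nn by (auto simp: i_def)
  have ij: "i + j = t" using i_le by (simp add: j_def)
  have jQ: "j \<le> Q" using i0_ge[of "int t - int Q"] i0_nn by (auto simp: L_def j_def i_def)
  have cutp: "(a < i \<and> b < j) \<or> (i \<le> a \<and> j \<le> b)" if ab: "(a, b) \<in> set \<pi>" for a b
    proof -
    show "(a < i \<and> b < j) \<or> (i \<le> a \<and> j \<le> b)"
    proof (cases "a + b + 1 < t")
      case True
      have "int a + 1 \<le> i0" using i0_ge[of "int a + 1"] ab True by (auto simp: L_def L1_def image_iff)
      moreover have "i0 \<le> int t - int b - 1" using le_all[OF i0_in] ab True by auto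
      ultimately show ?thesis using i0_nn i_le by (auto simp: i_def j_def)
    next
      case False
      hence gt: "a + b + 1 > t" using nj ab by fastforce
      have "int t - int b \<le> i0" using i0_ge[of "int t - int b"] ab gt by (auto simp: L_def L2_def image_iff)
      moreover have "i0 \<le> int a" using le_all[OF i0_in] ab gt by auto
      ultimately show ?thesis using i0_nn i_le by (auto simp: i_def j_def)
    qed
  qed
  have "\<forall>(a, b) \<in> set \<pi>. (a < i \<and> b < j) \<or> (i \<le> a \<and> j \<le> b)" using cutp by blast
  thus ?thesis using ij i_le jQ by blast
qed

lemma distinct_set_single: "distinct xs \<Longrightarrow> set xs = {z} \<Longrightarrow> xs = [z]"
  by (cases xs) (auto simp: subset_singleton_iff)

lemma align_score_single: "align_score S [(0, 0)] [c] [d] = S (Some c) (Some d)"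
  by (simp add: align_score_def lessThan_Suc)

lemma jump_opt:
  assumes pi: "\<pi> \<in> alignments (length x) (length y)" and ab: "(a, b) \<in> set \<pi>"
  shows "align_score S \<pi> x y \<le> opt_score S (take a x) (take b y) + S (Some (x ! a)) (Some (y ! b))
           + opt_score S (drop (Suc a) x) (drop (Suc b) y)"
proof -
  have sorted: "sorted_wrt ordp \<pi>" and bnd: "\<forall>(a, b) \<in> set \<pi>. a < length x \<and> b < length y"
    using pi by (auto simp: alignments_iff)
  have comp: "\<And>a b c d. (a, b) \<in> set \<pi> \<Longrightarrow> (c, d) \<in> set \<pi> \<Longrightarrow> (a = c \<and> b = d) \<or> (a < c \<and> b < d) \<or> (c < a \<and> d < b)"
    using sorted_ordp_cases[OF sorted] unfolding ordp_def by fastforce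
  have a_lt: "a < length x" and b_lt: "b < length y" using bnd ab by auto
  have cut1: "\<forall>(c, d) \<in> set \<pi>. (c < Suc a \<and> d < Suc b) \<or> (Suc a \<le> c \<and> Suc b \<le> d)"
  proof (clarify)
    fix c d assume "(c, d) \<in> set \<pi>" "\<not> (Suc a \<le> c \<and> Suc b \<le> d)"
    thus "c < Suc a \<and> d < Suc b" using comp[OF ab, of c d] by auto
  qed
  have sa: "Suc a \<le> length x" and sb: "Suc b \<le> length y" using a_lt b_lt by auto
  obtain \<pi>1 \<pi>2 where p1: "\<pi>1 \<in> alignments (Suc a) (Suc b)"
      and p2: "\<pi>2 \<in> alignments (length x - Suc a) (length y - Suc b)"
      and sc: "align_score S \<pi> x y = align_score S \<pi>1 (take (Suc a) x) (take (Suc b) y) + align_score S \<pi>2 (drop (Suc a) x) (drop (Suc b) y)"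
      and s1: "set \<pi>1 = {u \<in> set \<pi>. fst u < Suc a}"
      and "set \<pi>2 = (\<lambda>(c, d). (c - Suc a, d - Suc b)) ` {u \<in> set \<pi>. \<not> fst u < Suc a}"
    by (rule split_alignment[OF pi sa sb cut1])
  define x' where "x' = take (Suc a) x"
  define y' where "y' = take (Suc b) y"
  have lx': "length x' = Suc a" and ly': "length y' = Suc b" using a_lt b_lt by (auto simp: x'_def y'_def)
  have p1': "\<pi>1 \<in> alignments (length x') (length y')" using p1 lx' ly' by simp
  have cut2: "\<forall>(c, d) \<in> set \<pi>1. (c < a \<and> d < b) \<or> (a \<le> c \<and> b \<le> d)"
  proof (clarify)
    fix c d assume "(c, d) \<in> set \<pi>1" "\<not> (a \<le> c \<and> b \<le> d)"
    thus "c < a \<and> d < b" using comp[OF ab, of c d] unfolding s1 by auto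
  qed
  have sa': "a \<le> length x'" and sb': "b \<le> length y'" using lx' ly' by auto
  obtain \<pi>11 \<pi>12 where p11: "\<pi>11 \<in> alignments a b"
      and p12: "\<pi>12 \<in> alignments (length x' - a) (length y' - b)"
      and sc1: "align_score S \<pi>1 x' y' = align_score S \<pi>11 (take a x') (take b y') + align_score S \<pi>12 (drop a x') (drop b y')"
      and "set \<pi>11 = {u \<in> set \<pi>1. fst u < a}"
      and s12: "set \<pi>12 = (\<lambda>(c, d). (c - a, d - b)) ` {u \<in> set \<pi>1. \<not> fst u < a}"
    by (rule split_alignment[OF p1' sa' sb' cut2])
  have "{u \<in> set \<pi>1. \<not> fst u < a} = {(a, b)}"
  proof (intro set_eqI iffI)
    fix u assume "u \<in> {u \<in> set \<pi>1. \<not> fst u < a}"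
    hence "u \<in> set \<pi>" "fst u = a" unfolding s1 by auto
    thus "u \<in> {(a, b)}" using comp[OF ab, of "fst u" "snd u"] by auto
  next
    fix u assume "u \<in> {(a, b)}"
    thus "u \<in> {u \<in> set \<pi>1. \<not> fst u < a}" using ab unfolding s1 by auto
  qed
  hence "set \<pi>12 = {(0, 0)}" using s12 by simp
  moreover have "distinct \<pi>12" using p12 by (auto simp: alignments_iff intro: sorted_ordp_distinct)
  ultimately have e12: "\<pi>12 = [(0, 0)]" by (rule distinct_set_single[rotated])
  have dx: "drop a x' = [x ! a]" using a_lt unfolding x'_def
    by (simp add: take_Suc_conv_app_nth[OF a_lt])
  have dy: "drop b y' = [y ! b]" using b_lt unfolding y'_def
    by (simp add: take_Suc_conv_app_nth[OF b_lt])
  have tx: "take a x' = take a x" "take b y' = take b y" by (auto simp: x'_def y'_def)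
  have "align_score S \<pi>11 (take a x) (take b y) \<le> opt_score S (take a x) (take b y)"
    by (rule opt_score_ge) (use p11 a_lt b_lt in auto)
  moreover have "align_score S \<pi>2 (drop (Suc a) x) (drop (Suc b) y) \<le> opt_score S (drop (Suc a) x) (drop (Suc b) y)"
    by (rule opt_score_ge) (use p2 in auto)
  ultimately show ?thesis
    using sc sc1 e12 dx dy tx align_score_single[of S "x ! a" "y ! b"]
    unfolding x'_def y'_def by simp
qed

lemma swap_alignment:
  assumes sym: "\<And>c d. S c d = S d c" and pi: "\<pi> \<in> alignments (length x) (length y)"
  shows "map prod.swap \<pi> \<in> alignments (length y) (length x)"
    and "align_score S (map prod.swap \<pi>) y x = align_score S \<pi> x y"
proof -
  show "map prod.swap \<pi> \<in> alignments (length y) (length x)"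
    using pi unfolding alignments_iff
    by (auto simp: sorted_wrt_map ordp_def elim!: sorted_wrt_mono_rel[rotated])
  have f: "fst ` set (map prod.swap \<pi>) = snd ` set \<pi>" "snd ` set (map prod.swap \<pi>) = fst ` set \<pi>"
    by (force simp: image_iff)+
  have p: "(\<Sum>(i, j) \<leftarrow> map prod.swap \<pi>. S (Some (y ! i)) (Some (x ! j))) = (\<Sum>(i, j) \<leftarrow> \<pi>. S (Some (x ! i)) (Some (y ! j)))"
    by (induction \<pi>) (auto simp: sym)
  show "align_score S (map prod.swap \<pi>) y x = align_score S \<pi> x y"
    unfolding align_score_def p f by (simp add: sym[of None])
qed

lemma opt_sym:
  assumes sym: "\<And>c d. S c d = S d c"
  shows "opt_score S y x = opt_score S x y"
proof -
  have le: "opt_score S x y \<le> opt_score S y x" for x y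
  proof -
    obtain \<pi> where p: "\<pi> \<in> alignments (length x) (length y)" "opt_score S x y = align_score S \<pi> x y"
      by (rule opt_score_obtain)
    show ?thesis using opt_score_ge[OF swap_alignment(1)[OF sym p(1)], of S] swap_alignment(2)[OF sym p(1)] p(2)
      by simp
  qed
  show ?thesis using le[of x y] le[of y x] by simp
qed

lemma delta_ge: "\<bar>S c d - S c e\<bar> \<le> delta_norm (S :: 'a::finite option \<Rightarrow> 'a option \<Rightarrow> real)"
proof -
  have "finite {\<bar>S c d - S c e\<bar> | c d e. True}"
  proof (rule finite_subset)
    show "{\<bar>S c d - S c e\<bar> | c d e. True} \<subseteq> (\<lambda>(c, d, e). \<bar>S c d - S c e\<bar>) ` UNIV"
    proof
      fix z assume "z \<in> {\<bar>S c d - S c e\<bar> | c d e. True}"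
      then obtain c d e where "z = \<bar>S c d - S c e\<bar>" by blast
      thus "z \<in> (\<lambda>(c, d, e). \<bar>S c d - S c e\<bar>) ` UNIV" by (intro image_eqI[where x="(c, d, e)"]) auto
    qed
  qed simp
  thus ?thesis unfolding delta_norm_def by (rule Max_ge) auto
qed

lemma sup_ge: "\<bar>S c d\<bar> \<le> sup_norm (S :: 'a::finite option \<Rightarrow> 'a option \<Rightarrow> real)"
proof -
  have "finite {\<bar>S c d\<bar> | c d. True}"
  proof (rule finite_subset)
    show "{\<bar>S c d\<bar> | c d. True} \<subseteq> (\<lambda>(c, d). \<bar>S c d\<bar>) ` UNIV"
    proof
      fix z assume "z \<in> {\<bar>S c d\<bar> | c d. True}"
      then obtain c d where "z = \<bar>S c d\<bar>" by blast
      thus "z \<in> (\<lambda>(c, d). \<bar>S c d\<bar>) ` UNIV" by (intro image_eqI[where x="(c, d)"]) auto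
    qed
  qed simp
  thus ?thesis unfolding sup_norm_def by (rule Max_ge) auto
qed

abbreviation EE :: "'b pmf \<Rightarrow> ('b \<Rightarrow> real) \<Rightarrow> real" where
  "EE M f \<equiv> measure_pmf.expectation M f"

lemma EE_cong: "(\<And>x. x \<in> set_pmf M \<Longrightarrow> f x = g x) \<Longrightarrow> EE M f = EE M g"
  by (intro integral_cong_AE) (auto simp: AE_measure_pmf_iff)

lemma EE_mono: "finite (set_pmf M) \<Longrightarrow> (\<And>x. x \<in> set_pmf M \<Longrightarrow> f x \<le> g x) \<Longrightarrow> EE M f \<le> EE M g"
  by (intro integral_mono_AE) (auto simp: AE_measure_pmf_iff intro: integrable_measure_pmf_finite)

lemma EE_add: "finite (set_pmf M) \<Longrightarrow> EE M (\<lambda>x. f x + g x) = EE M f + EE M g"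
  by (intro Bochner_Integration.integral_add) (auto intro: integrable_measure_pmf_finite)

lemma EE_diff: "finite (set_pmf M) \<Longrightarrow> EE M (\<lambda>x. f x - g x) = EE M f - EE M g"
  by (intro Bochner_Integration.integral_diff) (auto intro: integrable_measure_pmf_finite)

lemma EE_const: "EE M (\<lambda>x. c) = c"
  by simp

lemma EE_sum_fin:
  assumes "finite A" "set_pmf M \<subseteq> A"
  shows "EE M f = (\<Sum>a\<in>A. f a * pmf M a)"
  using assms by (intro integral_measure_pmf_real) auto

lemma finite_set_rep: "finite (set_pmf (replicate_pmf n (p :: 'a::finite pmf)))"
proof -
  have "set_pmf (replicate_pmf n p) \<subseteq> {xs. set xs \<subseteq> UNIV \<and> length xs = n}"
    by (auto simp: set_replicate_pmf)
  moreover have "finite {xs. set xs \<subseteq> (UNIV :: 'a set) \<and> length xs = n}"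
    by (rule finite_lists_length_eq) simp
  ultimately show ?thesis by (rule finite_subset)
qed

lemma finite_set_pair: "finite (set_pmf A) \<Longrightarrow> finite (set_pmf B) \<Longrightarrow> finite (set_pmf (pair_pmf A B))"
  by simp

lemma EE_pair:
  assumes fA: "finite (set_pmf A)" and fB: "finite (set_pmf B)"
  shows "EE (pair_pmf A B) h = EE A (\<lambda>a. EE B (\<lambda>b. h (a, b)))"
proof -
  have "EE (pair_pmf A B) h = (\<Sum>u\<in>set_pmf A \<times> set_pmf B. h u * pmf (pair_pmf A B) u)"
    using fA fB by (intro EE_sum_fin) auto
  also have "\<dots> = (\<Sum>(a, b)\<in>set_pmf A \<times> set_pmf B. h (a, b) * (pmf A a * pmf B b))"
    by (intro sum.cong) (auto simp: pmf_pair)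
  also have "\<dots> = (\<Sum>a\<in>set_pmf A. \<Sum>b\<in>set_pmf B. h (a, b) * (pmf A a * pmf B b))"
    by (simp add: sum.cartesian_product)
  also have "\<dots> = (\<Sum>a\<in>set_pmf A. (\<Sum>b\<in>set_pmf B. h (a, b) * pmf B b) * pmf A a)"
    by (simp add: sum_distrib_right sum_distrib_left mult_ac)
  also have "\<dots> = (\<Sum>a\<in>set_pmf A. EE B (\<lambda>b. h (a, b)) * pmf A a)"
    using fB by (intro sum.cong refl) (simp add: EE_sum_fin)
  also have "\<dots> = EE A (\<lambda>a. EE B (\<lambda>b. h (a, b)))"
    using fA by (simp add: EE_sum_fin)
  finally show ?thesis .
qed

lemma EE_pair2:
  assumes fA: "finite (set_pmf A)" and fB: "finite (set_pmf B)"
  shows "EE (pair_pmf A B) h = EE B (\<lambda>b. EE A (\<lambda>a. h (a, b)))"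
proof -
  have "EE (pair_pmf A B) h = EE (pair_pmf B A) (\<lambda>(b, a). h (a, b))"
    by (subst pair_commute_pmf) (simp add: case_prod_beta)
  also have "\<dots> = EE B (\<lambda>b. EE A (\<lambda>a. h (a, b)))"
    using fA fB by (subst EE_pair) auto
  finally show ?thesis .
qed

lemma rep_add: "replicate_pmf (m + n) p = map_pmf (\<lambda>(a, b). a @ b) (pair_pmf (replicate_pmf m p) (replicate_pmf n p))"
  by (simp add: replicate_pmf_distrib pair_pmf_def map_bind_pmf bind_assoc_pmf bind_return_pmf map_return_pmf)

lemma rep_Suc: "replicate_pmf (Suc n) p = map_pmf (\<lambda>(x, xs). x # xs) (pair_pmf p (replicate_pmf n p))"
  by (simp add: pair_pmf_def map_bind_pmf bind_assoc_pmf bind_return_pmf map_return_pmf)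

declare replicate_pmf.simps(2)[simp del]

lemma EE_rep_add:
  "EE (replicate_pmf (m + n) (p :: 'a::finite pmf)) f
     = EE (replicate_pmf m p) (\<lambda>a. EE (replicate_pmf n p) (\<lambda>b. f (a @ b)))"
  by (simp add: rep_add EE_pair finite_set_rep case_prod_beta)

lemma jensen_exp:
  assumes "finite (set_pmf M)"
  shows "exp (s * EE M f) \<le> EE M (\<lambda>x. exp (s * f x))"
proof -
  let ?m = "EE M f"
  have "EE M (\<lambda>x. exp (s * ?m) * (1 + (s * f x - s * ?m))) \<le> EE M (\<lambda>x. exp (s * f x))"
  proof (rule EE_mono[OF assms])
    fix x
    have "1 + (s * f x - s * ?m) \<le> exp (s * f x - s * ?m)" by (rule exp_ge_add_one_self)
    hence "exp (s * ?m) * (1 + (s * f x - s * ?m)) \<le> exp (s * ?m) * exp (s * f x - s * ?m)"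
      by (intro mult_left_mono) auto
    thus "exp (s * ?m) * (1 + (s * f x - s * ?m)) \<le> exp (s * f x)" by (simp add: exp_diff)
  qed
  moreover have "EE M (\<lambda>x. exp (s * ?m) * (1 + (s * f x - s * ?m))) = exp (s * ?m)"
  proof -
    have "EE M (\<lambda>x. 1 + (s * f x - s * ?m)) = 1 + (s * ?m - s * ?m)"
      using assms by (simp add: EE_add EE_diff)
    thus ?thesis by simp
  qed
  ultimately show ?thesis by simp
qed


lemma hoeffding_pmf:
  fixes q :: "'b pmf" and g :: "'b \<Rightarrow> real"
  assumes fin: "finite (set_pmf q)" and s: "s > 0" and E0: "EE q g = 0"
      and rng: "\<And>x. x \<in> set_pmf q \<Longrightarrow> a \<le> g x \<and> g x \<le> a + d"
  shows "EE q (\<lambda>x. exp (s * g x)) \<le> exp (s\<^sup>2 * d\<^sup>2 / 8)"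
proof -
  interpret interval_bounded_random_variable "measure_pmf q" g a "a + d"
    by unfold_locales (auto simp: AE_measure_pmf_iff rng)
  have "nn_integral q (\<lambda>x. exp (s * g x)) \<le> ennreal (exp (s\<^sup>2 * (a + d - a)\<^sup>2 / 8))"
    by (rule Hoeffdings_lemma_nn_integral_0[OF s E0])
  moreover have "nn_integral q (\<lambda>x. exp (s * g x)) = ennreal (EE q (\<lambda>x. exp (s * g x)))"
    by (rule nn_integral_eq_integral) (auto intro: integrable_measure_pmf_finite[OF fin])
  ultimately show ?thesis by simp
qed

lemma EE_abs_le:
  assumes "finite (set_pmf M)" "\<And>x. x \<in> set_pmf M \<Longrightarrow> \<bar>f x\<bar> \<le> d"
  shows "\<bar>EE M f\<bar> \<le> d"
proof -
  have "EE M f \<le> EE M (\<lambda>_. d)" using assms by (intro EE_mono) (auto simp: abs_le_iff)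
  moreover have "EE M (\<lambda>_. - d) \<le> EE M f"
  proof (rule EE_mono[OF assms(1)])
    fix x assume "x \<in> set_pmf M" thus "- d \<le> f x" using assms(2)[of x] by linarith
  qed
  ultimately show ?thesis by simp
qed

lemma mcdiarmid_rep:
  fixes p :: "'a::finite pmf" and F :: "'a list \<Rightarrow> real"
  assumes s: "s > 0"
      and bd: "\<And>xs i c. length xs = m \<Longrightarrow> i < m \<Longrightarrow> \<bar>F (xs[i := c]) - F xs\<bar> \<le> d"
  shows "EE (replicate_pmf m p) (\<lambda>xs. exp (s * (F xs - EE (replicate_pmf m p) F))) \<le> exp (s\<^sup>2 * real m * d\<^sup>2 / 8)"
  using bd
proof (induction m arbitrary: F)
  case 0 thus ?case by simp
next
  case (Suc m)
  define G where "G xs = EE p (\<lambda>x. F (x # xs))" for xs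
  have finp: "finite (set_pmf p)" by simp
  have EF: "EE (replicate_pmf (Suc m) p) F = EE (replicate_pmf m p) G"
    by (simp add: rep_Suc EE_pair2 finite_set_rep G_def[abs_def] case_prod_beta)
  define \<mu> where "\<mu> = EE (replicate_pmf m p) G"
  have G_bd: "\<bar>G (xs[i := c]) - G xs\<bar> \<le> d" if "length xs = m" "i < m" for xs i c
  proof -
    have "G (xs[i := c]) - G xs = EE p (\<lambda>x. F ((x # xs)[Suc i := c]) - F (x # xs))"
      unfolding G_def by (simp add: EE_diff)
    also have "\<bar>\<dots>\<bar> \<le> d"
      by (rule EE_abs_le[OF finp]) (use Suc.prems[of "_ # xs" "Suc i" c] that in auto)
    finally show ?thesis .
  qed
  have IH: "EE (replicate_pmf m p) (\<lambda>xs. exp (s * (G xs - \<mu>))) \<le> exp (s\<^sup>2 * real m * d\<^sup>2 / 8)"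
    unfolding \<mu>_def by (rule Suc.IH) (rule G_bd)
  have inner: "EE p (\<lambda>x. exp (s * (F (x # xs) - \<mu>))) \<le> exp (s * (G xs - \<mu>)) * exp (s\<^sup>2 * d\<^sup>2 / 8)"
    if xs: "xs \<in> set_pmf (replicate_pmf m p)" for xs
  proof -
    have lxs: "length xs = m" using xs by (simp add: set_replicate_pmf)
    have "EE p (\<lambda>x. exp (s * (F (x # xs) - \<mu>))) = EE p (\<lambda>x. exp (s * (G xs - \<mu>)) * exp (s * (F (x # xs) - G xs)))"
      by (intro EE_cong) (simp add: mult_exp_exp algebra_simps)
    also have "\<dots> = exp (s * (G xs - \<mu>)) * EE p (\<lambda>x. exp (s * (F (x # xs) - G xs)))" by simp
    also have "EE p (\<lambda>x. exp (s * (F (x # xs) - G xs))) \<le> exp (s\<^sup>2 * d\<^sup>2 / 8)"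
    proof (rule hoeffding_pmf[OF finp s])
      show "EE p (\<lambda>x. F (x # xs) - G xs) = 0" by (simp add: EE_diff G_def)
      define lo where "lo = Min (range (\<lambda>x. F (x # xs)))"
      have "lo \<in> range (\<lambda>x. F (x # xs))" unfolding lo_def by (rule Min_in) auto
      then obtain x0 where x0: "F (x0 # xs) = lo" by auto
      fix x
      have "lo \<le> F (x # xs)" unfolding lo_def by (rule Min_le) auto
      moreover have "\<bar>F ((x0 # xs)[0 := x]) - F (x0 # xs)\<bar> \<le> d"
        by (rule Suc.prems) (auto simp: lxs)
      ultimately show "lo - G xs \<le> F (x # xs) - G xs \<and> F (x # xs) - G xs \<le> lo - G xs + d"
        using x0 by auto
    qed
    finally show ?thesis by (simp add: mult_left_mono)
  qed
  have "EE (replicate_pmf (Suc m) p) (\<lambda>ys. exp (s * (F ys - EE (replicate_pmf (Suc m) p) F)))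
      = EE (replicate_pmf m p) (\<lambda>xs. EE p (\<lambda>x. exp (s * (F (x # xs) - \<mu>))))"
    unfolding EF \<mu>_def by (simp add: rep_Suc EE_pair2 finite_set_rep case_prod_beta)
  also have "\<dots> \<le> EE (replicate_pmf m p) (\<lambda>xs. exp (s * (G xs - \<mu>)) * exp (s\<^sup>2 * d\<^sup>2 / 8))"
    by (rule EE_mono[OF finite_set_rep]) (rule inner)
  also have "\<dots> = EE (replicate_pmf m p) (\<lambda>xs. exp (s * (G xs - \<mu>))) * exp (s\<^sup>2 * d\<^sup>2 / 8)"
    by simp
  also have "\<dots> \<le> exp (s\<^sup>2 * real m * d\<^sup>2 / 8) * exp (s\<^sup>2 * d\<^sup>2 / 8)"
    by (rule mult_right_mono[OF IH]) simp
  also have "\<dots> = exp (s\<^sup>2 * real (Suc m) * d\<^sup>2 / 8)"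
    by (simp add: mult_exp_exp algebra_simps add_divide_distrib)
  finally show ?case .
qed


definition DD :: "nat \<Rightarrow> nat \<Rightarrow> 'b pmf \<Rightarrow> ('b list \<times> 'b list) pmf" where
  "DD P Q p = pair_pmf (replicate_pmf P p) (replicate_pmf Q p)"

lemma finite_DD: "finite (set_pmf (DD P Q (p :: 'a::finite pmf)))"
  by (simp add: DD_def finite_set_rep)

lemma set_DD: "u \<in> set_pmf (DD P Q p) \<Longrightarrow> length (fst u) = P \<and> length (snd u) = Q"
  by (auto simp: DD_def set_replicate_pmf)

lemma EE_DD: "EE (DD P Q (p :: 'a::finite pmf)) h = EE (replicate_pmf P p) (\<lambda>x. EE (replicate_pmf Q p) (\<lambda>y. h (x, y)))"
  unfolding DD_def by (rule EE_pair) (auto simp: finite_set_rep)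

lemma EE_DD_rep:
  "EE (DD P Q (p :: 'a::finite pmf)) h = EE (replicate_pmf (P + Q) p) (\<lambda>z. h (take P z, drop P z))"
proof -
  have "EE (replicate_pmf (P + Q) p) (\<lambda>z. h (take P z, drop P z))
      = EE (pair_pmf (replicate_pmf P p) (replicate_pmf Q p)) (\<lambda>u. h (take P (fst u @ snd u), drop P (fst u @ snd u)))"
    by (simp add: rep_add case_prod_beta)
  also have "\<dots> = EE (DD P Q p) h"
    unfolding DD_def[symmetric] by (intro EE_cong) (auto dest: set_DD)
  finally show ?thesis by simp
qed

lemma mcdiarmid_DD:
  fixes p :: "'a::finite pmf" and H :: "'a list \<times> 'a list \<Rightarrow> real"
  assumes s: "s > 0"
      and bdx: "\<And>x y k c. length x = P \<Longrightarrow> length y = Q \<Longrightarrow> k < P \<Longrightarrow> \<bar>H (x[k := c], y) - H (x, y)\<bar> \<le> d"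
      and bdy: "\<And>x y k c. length x = P \<Longrightarrow> length y = Q \<Longrightarrow> k < Q \<Longrightarrow> \<bar>H (x, y[k := c]) - H (x, y)\<bar> \<le> d"
  shows "EE (DD P Q p) (\<lambda>u. exp (s * H u)) \<le> exp (s * EE (DD P Q p) H + s\<^sup>2 * real (P + Q) * d\<^sup>2 / 8)"
proof -
  define F where "F z = H (take P z, drop P z)" for z
  have bdF: "\<bar>F (z[i := c]) - F z\<bar> \<le> d" if "length z = P + Q" "i < P + Q" for z i c
  proof (cases "i < P")
    case True
    have "take P (z[i := c]) = (take P z)[i := c]" by (simp add: take_update_swap)
    moreover have "drop P (z[i := c]) = drop P z" using True by simp
    ultimately show ?thesis unfolding F_def using bdx[of "take P z" "drop P z" i c] that True by simp
  next
    case False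
    have "take P (z[i := c]) = take P z" using False by simp
    moreover have "drop P (z[i := c]) = (drop P z)[i - P := c]" using False by (simp add: drop_update_swap)
    ultimately show ?thesis unfolding F_def using bdy[of "take P z" "drop P z" "i - P" c] that False by simp
  qed
  have EF: "EE (DD P Q p) H = EE (replicate_pmf (P + Q) p) F" unfolding F_def by (rule EE_DD_rep)
  have "EE (DD P Q p) (\<lambda>u. exp (s * H u)) = EE (replicate_pmf (P + Q) p) (\<lambda>z. exp (s * F z))"
    unfolding F_def by (rule EE_DD_rep)
  also have "\<dots> = EE (replicate_pmf (P + Q) p) (\<lambda>z. exp (s * EE (DD P Q p) H) * exp (s * (F z - EE (replicate_pmf (P + Q) p) F)))"
    unfolding EF by (intro EE_cong) (simp add: mult_exp_exp algebra_simps)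
  also have "\<dots> = exp (s * EE (DD P Q p) H) * EE (replicate_pmf (P + Q) p) (\<lambda>z. exp (s * (F z - EE (replicate_pmf (P + Q) p) F)))"
    by simp
  also have "\<dots> \<le> exp (s * EE (DD P Q p) H) * exp (s\<^sup>2 * real (P + Q) * d\<^sup>2 / 8)"
    by (intro mult_left_mono mcdiarmid_rep[OF s]) (auto intro: bdF)
  also have "\<dots> = exp (s * EE (DD P Q p) H + s\<^sup>2 * real (P + Q) * d\<^sup>2 / 8)" by (simp add: mult_exp_exp)
  finally show ?thesis .
qed

lemma EE_DD_split:
  fixes p :: "'a::finite pmf"
  assumes i: "i \<le> P" and j: "j \<le> Q"
  shows "EE (DD P Q p) (\<lambda>u. F (take i (fst u), take j (snd u)) * G (drop i (fst u), drop j (snd u)))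
       = EE (DD i j p) F * EE (DD (P - i) (Q - j) p) G"
proof -
  define f1 where "f1 x1 = EE (replicate_pmf j p) (\<lambda>y1. F (x1, y1))" for x1
  define g2 where "g2 x2 = EE (replicate_pmf (Q - j) p) (\<lambda>y2. G (x2, y2))" for x2
  have P': "P = i + (P - i)" and Q': "Q = j + (Q - j)" using i j by auto
  have "EE (DD P Q p) (\<lambda>u. F (take i (fst u), take j (snd u)) * G (drop i (fst u), drop j (snd u)))
     = EE (replicate_pmf P p) (\<lambda>x. EE (replicate_pmf Q p) (\<lambda>y. F (take i x, take j y) * G (drop i x, drop j y)))"
    by (simp add: EE_DD)
  also have "\<dots> = EE (replicate_pmf (i + (P - i)) p) (\<lambda>x. EE (replicate_pmf (j + (Q - j)) p) (\<lambda>y. F (take i x, take j y) * G (drop i x, drop j y)))"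
    using P' Q' by simp
  also have "\<dots> = EE (replicate_pmf i p) (\<lambda>x1. EE (replicate_pmf (P - i) p) (\<lambda>x2.
        EE (replicate_pmf j p) (\<lambda>y1. EE (replicate_pmf (Q - j) p) (\<lambda>y2.
          F (take i (x1 @ x2), take j (y1 @ y2)) * G (drop i (x1 @ x2), drop j (y1 @ y2))))))"
    by (simp add: EE_rep_add)
  also have "\<dots> = EE (replicate_pmf i p) (\<lambda>x1. EE (replicate_pmf (P - i) p) (\<lambda>x2.
        EE (replicate_pmf j p) (\<lambda>y1. EE (replicate_pmf (Q - j) p) (\<lambda>y2. F (x1, y1) * G (x2, y2)))))"
    by (intro EE_cong) (auto simp: set_replicate_pmf)
  also have "\<dots> = EE (replicate_pmf i p) (\<lambda>x1. EE (replicate_pmf (P - i) p) (\<lambda>x2. f1 x1 * g2 x2))"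
    by (simp add: f1_def g2_def)
  also have "\<dots> = EE (replicate_pmf i p) f1 * EE (replicate_pmf (P - i) p) g2"
    by simp
  also have "\<dots> = EE (DD i j p) F * EE (DD (P - i) (Q - j) p) G"
    by (simp add: EE_DD f1_def[abs_def] g2_def[abs_def])
  finally show ?thesis .
qed

lemma EE_DD_one: "EE (DD P Q p) (\<lambda>_. 1) = 1"
  by simp

lemma EE_DD_marg1:
  fixes p :: "'a::finite pmf"
  assumes i: "i \<le> P" and j: "j \<le> Q"
  shows "EE (DD P Q p) (\<lambda>u. F (take i (fst u), take j (snd u))) = EE (DD i j p) F"
  using EE_DD_split[OF i j, of p F "\<lambda>_. 1"] by simp

lemma EE_DD_marg2:
  fixes p :: "'a::finite pmf"
  assumes i: "i \<le> P" and j: "j \<le> Q"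
  shows "EE (DD P Q p) (\<lambda>u. G (drop i (fst u), drop j (snd u))) = EE (DD (P - i) (Q - j) p) G"
  using EE_DD_split[OF i j, of p "\<lambda>_. 1" G] by simp

lemma EE_DD_split_add:
  fixes p :: "'a::finite pmf"
  assumes i: "i \<le> P" and j: "j \<le> Q"
  shows "EE (DD P Q p) (\<lambda>u. F (take i (fst u), take j (snd u)) + G (drop i (fst u), drop j (snd u)))
       = EE (DD i j p) F + EE (DD (P - i) (Q - j) p) G"
  by (simp add: EE_add finite_DD EE_DD_marg1[OF i j] EE_DD_marg2[OF i j])

lemma EE_DD_swap:
  "EE (DD P Q p) (\<lambda>u. h (fst u) (snd u)) = EE (DD Q P p) (\<lambda>u. h (snd u) (fst u))"
  unfolding DD_def by (subst pair_commute_pmf) (simp add: case_prod_beta)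

lemma opt_nil: "opt_score S [] [] = 0"
proof -
  have "alignments 0 0 = {[]}"
  proof (intro set_eqI iffI)
    fix \<pi> assume "\<pi> \<in> alignments 0 0"
    thus "\<pi> \<in> {[]}" by (cases \<pi>) (auto simp: alignments_def)
  qed (simp add: alignments_def)
  thus ?thesis by (simp add: opt_score_def align_score_def)
qed

lemma as_bd:
  fixes S :: "'a::finite option \<Rightarrow> 'a option \<Rightarrow> real"
  assumes sym: "\<And>c d. S c d = S d c"
      and pi: "\<pi> \<in> alignments (length x) (length y)" and k: "k < length x"
  shows "\<bar>align_score S \<pi> (x[k := c]) y - align_score S \<pi> x y\<bar> \<le> delta_norm S"
proof -
  have sorted: "sorted_wrt ordp \<pi>" and bnd: "\<forall>(a, b) \<in> set \<pi>. a < length x \<and> b < length y"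
    using pi by (auto simp: alignments_iff)
  have dist: "distinct \<pi>" by (rule sorted_ordp_distinct[OF sorted])
  have comp: "\<And>a b c d. (a, b) \<in> set \<pi> \<Longrightarrow> (c, d) \<in> set \<pi> \<Longrightarrow> (a = c \<and> b = d) \<or> (a < c \<and> b < d) \<or> (c < a \<and> d < b)"
    using sorted_ordp_cases[OF sorted] unfolding ordp_def by fastforce
  let ?x' = "x[k := c]"
  define pf where "pf z u = S (Some (z ! fst u)) (Some (y ! snd u))" for z u
  define gx where "gx z j = S (Some (z ! j)) None" for z j
  define G where "G = {..<length x} - fst ` set \<pi>"
  have ps: "(\<Sum>(i, j) \<leftarrow> \<pi>. S (Some (z ! i)) (Some (y ! j))) = (\<Sum>u\<in>set \<pi>. pf z u)" for z
    using dist by (simp add: sum_list_distinct_conv_sum_set pf_def case_prod_beta)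
  have as: "align_score S \<pi> z y = (\<Sum>u\<in>set \<pi>. pf z u) + (\<Sum>j\<in>G. gx z j) + (\<Sum>j\<in>{..<length y} - snd ` set \<pi>. S None (Some (y ! j)))"
    if "length z = length x" for z
    unfolding align_score_def ps G_def gx_def using that by simp
  show ?thesis
  proof (cases "\<exists>b. (k, b) \<in> set \<pi>")
    case True
    then obtain b where kb: "(k, b) \<in> set \<pi>" by blast
    have other: "u \<in> set \<pi> - {(k, b)} \<Longrightarrow> fst u \<noteq> k" for u
      using comp[OF kb, of "fst u" "snd u"] by auto
    have p1: "(\<Sum>u\<in>set \<pi>. pf z u) = pf z (k, b) + (\<Sum>u\<in>set \<pi> - {(k, b)}. pf z u)" for z
      using kb by (simp add: sum.remove)
    have p2: "(\<Sum>u\<in>set \<pi> - {(k, b)}. pf ?x' u) = (\<Sum>u\<in>set \<pi> - {(k, b)}. pf x u)"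
    proof (intro sum.cong refl)
      fix u assume "u \<in> set \<pi> - {(k, b)}"
      hence "fst u \<noteq> k" by (rule other)
      thus "pf ?x' u = pf x u" by (simp add: pf_def)
    qed
    have g: "(\<Sum>j\<in>G. gx ?x' j) = (\<Sum>j\<in>G. gx x j)"
      using kb by (intro sum.cong) (auto simp: gx_def G_def image_iff)
    have lx: "length ?x' = length x" by simp
    have "align_score S \<pi> ?x' y - align_score S \<pi> x y = pf ?x' (k, b) - pf x (k, b)"
      unfolding as[OF lx] as[OF refl] p1[of ?x'] p1[of x] p2 g by linarith
    also have "\<dots> = S (Some (y ! b)) (Some c) - S (Some (y ! b)) (Some (x ! k))"
      using k sym[of "Some c" "Some (y ! b)"] sym[of "Some (x ! k)" "Some (y ! b)"] by (simp add: pf_def)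
    finally show ?thesis using delta_ge[of S "Some (y ! b)" "Some c" "Some (x ! k)"] by simp
  next
    case False
    have p: "(\<Sum>u\<in>set \<pi>. pf ?x' u) = (\<Sum>u\<in>set \<pi>. pf x u)"
    proof (intro sum.cong refl)
      fix u assume "u \<in> set \<pi>"
      hence "fst u \<noteq> k" using False by (metis prod.collapse)
      thus "pf ?x' u = pf x u" by (simp add: pf_def)
    qed
    have kG: "k \<in> G" using False k by (force simp: G_def)
    have g1: "(\<Sum>j\<in>G. gx z j) = gx z k + (\<Sum>j\<in>G - {k}. gx z j)" for z
      using kG by (simp add: sum.remove G_def)
    have g2: "(\<Sum>j\<in>G - {k}. gx ?x' j) = (\<Sum>j\<in>G - {k}. gx x j)"
      by (intro sum.cong) (auto simp: gx_def)
    have lx: "length ?x' = length x" by simp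
    have "align_score S \<pi> ?x' y - align_score S \<pi> x y = gx ?x' k - gx x k"
      unfolding as[OF lx] as[OF refl] p g1[of ?x'] g1[of x] g2 by linarith
    also have "\<dots> = S None (Some c) - S None (Some (x ! k))"
      using k sym[of "Some c" None] sym[of "Some (x ! k)" None] by (simp add: gx_def)
    finally show ?thesis using delta_ge[of S None "Some c" "Some (x ! k)"] by simp
  qed
qed

lemma opt_bd_x:
  fixes S :: "'a::finite option \<Rightarrow> 'a option \<Rightarrow> real"
  assumes sym: "\<And>c d. S c d = S d c" and k: "k < length x"
  shows "\<bar>opt_score S (x[k := c]) y - opt_score S x y\<bar> \<le> delta_norm S"
proof -
  have le: "opt_score S z y - delta_norm S \<le> opt_score S (z[k := e]) y" if "k < length z" for z e
  proof -
    obtain \<pi> where p: "\<pi> \<in> alignments (length z) (length y)" "opt_score S z y = align_score S \<pi> z y"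
      by (rule opt_score_obtain)
    have "align_score S \<pi> z y - delta_norm S \<le> align_score S \<pi> (z[k := e]) y"
      using as_bd[where S=S, OF sym p(1) that, where c=e] by linarith
    also have "\<dots> \<le> opt_score S (z[k := e]) y" by (rule opt_score_ge) (use p in simp)
    finally show ?thesis using p by simp
  qed
  have "opt_score S x y - delta_norm S \<le> opt_score S (x[k := c]) y" by (rule le[OF k])
  moreover have "opt_score S (x[k := c]) y - delta_norm S \<le> opt_score S ((x[k := c])[k := x ! k]) y"
    by (rule le) (use k in simp)
  moreover have "(x[k := c])[k := x ! k] = x" by simp
  ultimately show ?thesis by auto
qed

lemma opt_bd_y:
  fixes S :: "'a::finite option \<Rightarrow> 'a option \<Rightarrow> real"
  assumes sym: "\<And>c d. S c d = S d c" and k: "k < length y"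
  shows "\<bar>opt_score S x (y[k := c]) - opt_score S x y\<bar> \<le> delta_norm S"
proof -
  have "opt_score S x (y[k := c]) = opt_score S (y[k := c]) x" by (rule opt_sym[where S=S, OF sym, symmetric])
  moreover have "opt_score S x y = opt_score S y x" by (rule opt_sym[where S=S, OF sym, symmetric])
  ultimately show ?thesis using opt_bd_x[where S=S, OF sym k, where c=c and y=x] by simp
qed

locale lsetup =
  fixes p :: "'a::finite pmf" and S :: "'a option \<Rightarrow> 'a option \<Rightarrow> real"
  assumes sym: "\<And>c d. S c d = S d c"
begin

definition ff :: "nat \<Rightarrow> nat \<Rightarrow> real" where
  "ff P Q = EE (DD P Q p) (\<lambda>(x, y). opt_score S x y)"

definition sig :: real where
  "sig = EE (DD 1 1 p) (\<lambda>(x, y). S (Some (hd x)) (Some (hd y)))"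

lemma lambda_n_ff: "lambda_n p S n = ff n n / real n"
  by (simp add: lambda_n_def ff_def DD_def)

lemma ff_superadd: "ff P1 Q1 + ff P2 Q2 \<le> ff (P1 + P2) (Q1 + Q2)"
proof -
  have "ff P1 Q1 + ff P2 Q2 = EE (DD (P1 + P2) (Q1 + Q2) p)
      (\<lambda>u. (\<lambda>(x, y). opt_score S x y) (take P1 (fst u), take Q1 (snd u)) + (\<lambda>(x, y). opt_score S x y) (drop P1 (fst u), drop Q1 (snd u)))"
    unfolding ff_def by (subst EE_DD_split_add) auto
  also have "\<dots> \<le> ff (P1 + P2) (Q1 + Q2)" unfolding ff_def
  proof (rule EE_mono[OF finite_DD])
    fix u :: "'a list \<times> 'a list"
    show "(\<lambda>(x, y). opt_score S x y) (take P1 (fst u), take Q1 (snd u)) + (\<lambda>(x, y). opt_score S x y) (drop P1 (fst u), drop Q1 (snd u))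
        \<le> (\<lambda>(x, y). opt_score S x y) u"
      using superadd_opt[of S "take P1 (fst u)" "take Q1 (snd u)" "drop P1 (fst u)" "drop Q1 (snd u)"]
      by (simp add: case_prod_beta)
  qed
  finally show ?thesis .
qed

lemma ff_sym: "ff P Q = ff Q P"
proof -
  have "ff P Q = EE (DD P Q p) (\<lambda>u. opt_score S (fst u) (snd u))" by (simp add: ff_def case_prod_unfold)
  also have "\<dots> = EE (DD Q P p) (\<lambda>u. opt_score S (snd u) (fst u))" by (rule EE_DD_swap)
  also have "\<dots> = ff Q P" by (simp add: ff_def case_prod_unfold opt_sym[OF sym])
  finally show ?thesis .
qed

lemma ff_half: "ff P Q \<le> ff (P + Q) (P + Q) / 2"
  using ff_superadd[of P Q Q P] ff_sym[of P Q] by (simp add: add.commute)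

lemma ff_11: "sig \<le> ff 1 1"
  unfolding sig_def ff_def
proof (rule EE_mono[OF finite_DD])
  fix u assume "u \<in> set_pmf (DD 1 1 p)"
  then obtain a b where u: "u = ([a], [b])" using set_DD[of u 1 1 p]
    by (cases u) (auto simp: length_Suc_conv)
  have "[(0, 0)] \<in> alignments (length [a]) (length [b])" by (simp add: alignments_def)
  from opt_score_ge[OF this, of S] show "(\<lambda>(x, y). S (Some (hd x)) (Some (hd y))) u \<le> (\<lambda>(x, y). opt_score S x y) u"
    using u align_score_single[of S a b] by simp
qed

lemma ff_mult: "real k * ff 1 1 \<le> ff k k"
proof (induction k)
  case 0 thus ?case by (simp add: ff_def DD_def opt_nil)
next
  case (Suc k)
  have "ff k k + ff 1 1 \<le> ff (Suc k) (Suc k)" using ff_superadd[of k k 1 1] by simp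
  thus ?case using Suc by (simp add: algebra_simps)
qed

lemma sig_le_lambda: "n \<ge> 1 \<Longrightarrow> sig \<le> ff n n / real n"
proof -
  assume n: "n \<ge> 1"
  have "real n * sig \<le> real n * ff 1 1" using ff_11 by (intro mult_left_mono) auto
  also have "\<dots> \<le> ff n n" by (rule ff_mult)
  finally show ?thesis using n by (simp add: field_simps)
qed

lemma ff_pred: "n \<ge> 1 \<Longrightarrow> ff (n - 1) (n - 1) + sig \<le> ff n n"
  using ff_superadd[of "n - 1" "n - 1" 1 1] ff_11 by simp

end

context lsetup
begin

lemma aux_lin: "(v1::real) \<le> v2 / 2 \<Longrightarrow> v2 + v3 \<le> v4 \<Longrightarrow> v3 \<le> v5 \<Longrightarrow> v1 + v3 \<le> (v4 + v5) / 2"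
  by (simp add: field_simps)

definition JJ :: "nat \<Rightarrow> nat \<Rightarrow> 'a list \<times> 'a list \<Rightarrow> real" where
  "JJ a b u = opt_score S (take a (fst u)) (take b (snd u)) + S (Some (fst u ! a)) (Some (snd u ! b))"

lemma JJ_EE: "EE (DD (Suc a) (Suc b) p) (JJ a b) = ff a b + sig"
proof -
  have "EE (DD (Suc a) (Suc b) p) (JJ a b) = EE (DD (Suc a) (Suc b) p)
      (\<lambda>u. (\<lambda>(x, y). opt_score S x y) (take a (fst u), take b (snd u))
         + (\<lambda>(x, y). S (Some (hd x)) (Some (hd y))) (drop a (fst u), drop b (snd u)))"
  proof (rule EE_cong)
    fix u assume "u \<in> set_pmf (DD (Suc a) (Suc b) p)"
    hence l: "length (fst u) = Suc a" "length (snd u) = Suc b" by (auto dest: set_DD)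
    show "JJ a b u = (\<lambda>(x, y). opt_score S x y) (take a (fst u), take b (snd u))
         + (\<lambda>(x, y). S (Some (hd x)) (Some (hd y))) (drop a (fst u), drop b (snd u))"
      using l by (simp add: JJ_def hd_drop_conv_nth)
  qed
  also have "\<dots> = ff a b + sig"
    by (subst EE_DD_split_add) (auto simp: ff_def sig_def)
  finally show ?thesis .
qed

lemma S_bd1: "\<bar>S (Some c) e - S (Some c') e\<bar> \<le> delta_norm S"
  using delta_ge[of S e "Some c" "Some c'"] sym[of "Some c" e] sym[of "Some c'" e] by simp

lemma S_bd2: "\<bar>S e (Some c) - S e (Some c')\<bar> \<le> delta_norm S"
  using delta_ge[of S e "Some c" "Some c'"] by simp

lemma JJ_bdx:
  assumes "length x = Suc a" "length y = Suc b" "k < Suc a"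
  shows "\<bar>JJ a b (x[k := c], y) - JJ a b (x, y)\<bar> \<le> delta_norm S"
proof (cases "k < a")
  case True
  have "take a (x[k := c]) = (take a x)[k := c]" by (simp add: take_update_swap)
  moreover have "x[k := c] ! a = x ! a" using True by simp
  moreover have "\<bar>opt_score S ((take a x)[k := c]) (take b y) - opt_score S (take a x) (take b y)\<bar> \<le> delta_norm S"
    by (rule opt_bd_x[OF sym]) (use True assms in simp)
  ultimately show ?thesis by (simp add: JJ_def)
next
  case False
  hence k: "k = a" using assms by simp
  have "take a (x[k := c]) = take a x" using k by simp
  moreover have "x[k := c] ! a = c" using k assms by simp
  ultimately show ?thesis using S_bd1[of c "Some (y ! b)" "x ! a"] by (simp add: JJ_def)
qed

lemma JJ_bdy:
  assumes "length x = Suc a" "length y = Suc b" "k < Suc b"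
  shows "\<bar>JJ a b (x, y[k := c]) - JJ a b (x, y)\<bar> \<le> delta_norm S"
proof (cases "k < b")
  case True
  have "take b (y[k := c]) = (take b y)[k := c]" by (simp add: take_update_swap)
  moreover have "y[k := c] ! b = y ! b" using True by simp
  moreover have "\<bar>opt_score S (take a x) ((take b y)[k := c]) - opt_score S (take a x) (take b y)\<bar> \<le> delta_norm S"
    by (rule opt_bd_y[OF sym]) (use True assms in simp)
  ultimately show ?thesis by (simp add: JJ_def)
next
  case False
  hence k: "k = b" using assms by simp
  have "take b (y[k := c]) = take b y" using k by simp
  moreover have "y[k := c] ! b = c" using k assms by simp
  ultimately show ?thesis using S_bd2[of "Some (x ! a)" c "y ! b"] by (simp add: JJ_def)
qed

definition alpha :: "nat \<Rightarrow> real \<Rightarrow> real" where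
  "alpha n s = s * (ff n n / real n) / 2 + s\<^sup>2 * (delta_norm S)\<^sup>2 / 8"

definition Mexp :: "real \<Rightarrow> nat \<Rightarrow> nat \<Rightarrow> real" where
  "Mexp s P Q = EE (DD P Q p) (\<lambda>u. exp (s * opt_score S (fst u) (snd u)))"

lemma piece_cut:
  assumes n: "n \<ge> 1" and s: "s > 0" and ij: "i + j = n"
  shows "Mexp s i j \<le> exp (real n * alpha n s)"
proof -
  have "Mexp s i j \<le> exp (s * EE (DD i j p) (\<lambda>u. opt_score S (fst u) (snd u)) + s\<^sup>2 * real (i + j) * (delta_norm S)\<^sup>2 / 8)"
    unfolding Mexp_def
    by (rule mcdiarmid_DD[OF s]) (auto intro: opt_bd_x[OF sym] opt_bd_y[OF sym])
  also have "EE (DD i j p) (\<lambda>u. opt_score S (fst u) (snd u)) = ff i j" by (simp add: ff_def case_prod_unfold)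
  also have "s * ff i j \<le> s * (ff n n / 2)"
    using ff_half[of i j] ij s by (intro mult_left_mono) auto
  hence "exp (s * ff i j + s\<^sup>2 * real (i + j) * (delta_norm S)\<^sup>2 / 8) \<le> exp (s * (ff n n / 2) + s\<^sup>2 * real n * (delta_norm S)\<^sup>2 / 8)"
    using ij by simp
  also have "s * (ff n n / 2) + s\<^sup>2 * real n * (delta_norm S)\<^sup>2 / 8 = real n * alpha n s"
    using n by (simp add: alpha_def field_simps)
  finally show ?thesis .
qed

lemma piece_jump:
  assumes n: "n \<ge> 1" and s: "s > 0" and ab: "a + b + 1 = n"
  shows "EE (DD (Suc a) (Suc b) p) (\<lambda>u. exp (s * JJ a b u)) \<le> exp (real (n + 1) * alpha n s)"
proof -
  have md: "EE (DD (Suc a) (Suc b) p) (\<lambda>u. exp (s * JJ a b u)) \<le> exp (s * EE (DD (Suc a) (Suc b) p) (JJ a b) + s\<^sup>2 * real (Suc a + Suc b) * (delta_norm S)\<^sup>2 / 8)"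
  proof (rule mcdiarmid_DD[OF s])
    fix x y :: "'a list" and k c
    assume "length x = Suc a" "length y = Suc b" "k < Suc a"
    thus "\<bar>JJ a b (x[k := c], y) - JJ a b (x, y)\<bar> \<le> delta_norm S" by (rule JJ_bdx)
  next
    fix x y :: "'a list" and k c
    assume "length x = Suc a" "length y = Suc b" "k < Suc b"
    thus "\<bar>JJ a b (x, y[k := c]) - JJ a b (x, y)\<bar> \<le> delta_norm S" by (rule JJ_bdy)
  qed
  have ej: "EE (DD (Suc a) (Suc b) p) (JJ a b) = ff a b + sig" by (rule JJ_EE)
  have le: "ff a b + sig \<le> (real (n + 1) / real n) * (ff n n / 2)"
  proof -
    have "n - 1 = a + b" using ab by simp
    hence "ff a b \<le> ff (n - 1) (n - 1) / 2" using ff_half[of a b] by simp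
    moreover have "ff (n - 1) (n - 1) + sig \<le> ff n n" by (rule ff_pred[OF n])
    moreover have "sig \<le> ff n n / real n" by (rule sig_le_lambda[OF n])
    ultimately have "ff a b + sig \<le> (ff n n + ff n n / real n) / 2"
      by (rule aux_lin)
    also have "\<dots> = (real (n + 1) / real n) * (ff n n / 2)" using n by (simp add: field_simps)
    finally show ?thesis .
  qed
  have "s * (ff a b + sig) \<le> s * ((real (n + 1) / real n) * (ff n n / 2))"
    using s le by (intro mult_left_mono) auto
  moreover have "real (Suc a + Suc b) = real (n + 1)" using ab by simp
  ultimately have "exp (s * (ff a b + sig) + s\<^sup>2 * real (Suc a + Suc b) * (delta_norm S)\<^sup>2 / 8)
      \<le> exp (s * ((real (n + 1) / real n) * (ff n n / 2)) + s\<^sup>2 * real (n + 1) * (delta_norm S)\<^sup>2 / 8)"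
    by simp
  also have "s * ((real (n + 1) / real n) * (ff n n / 2)) + s\<^sup>2 * real (n + 1) * (delta_norm S)\<^sup>2 / 8 = real (n + 1) * alpha n s"
    using n by (simp add: alpha_def field_simps)
  finally have fin: "exp (s * (ff a b + sig) + s\<^sup>2 * real (Suc a + Suc b) * (delta_norm S)\<^sup>2 / 8) \<le> exp (real (n + 1) * alpha n s)" .
  from md have "EE (DD (Suc a) (Suc b) p) (\<lambda>u. exp (s * JJ a b u)) \<le> exp (s * (ff a b + sig) + s\<^sup>2 * real (Suc a + Suc b) * (delta_norm S)\<^sup>2 / 8)"
    by (simp only: ej)
  thus ?thesis using fin by (rule order.trans)
qed

end

lemma EE_sum: "finite (set_pmf M) \<Longrightarrow> EE M (\<lambda>x. \<Sum>i\<in>I. f i x) = (\<Sum>i\<in>I. EE M (f i))"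
  by (rule Bochner_Integration.integral_sum) (auto intro: integrable_measure_pmf_finite)

context lsetup
begin

definition CI :: "nat \<Rightarrow> nat \<Rightarrow> nat \<Rightarrow> nat set" where
  "CI n P Q = {i. i \<le> n \<and> i \<le> P \<and> n - i \<le> Q}"

definition JI :: "nat \<Rightarrow> nat \<Rightarrow> nat \<Rightarrow> nat set" where
  "JI n P Q = {a. a < n \<and> a < P \<and> n - 1 - a < Q}"

lemma finite_CI: "finite (CI n P Q)" unfolding CI_def by (rule finite_subset[of _ "{..n}"]) auto
lemma finite_JI: "finite (JI n P Q)" unfolding JI_def by (rule finite_subset[of _ "{..<n}"]) auto

lemma card_CI_JI: "card (CI n P Q) + card (JI n P Q) \<le> 2 * n + 1"
proof -
  have "card (CI n P Q) \<le> card {..n}" unfolding CI_def by (rule card_mono) auto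
  moreover have "card (JI n P Q) \<le> card {..<n}" unfolding JI_def by (rule card_mono) auto
  ultimately show ?thesis by simp
qed

lemma rec_pointwise:
  assumes n: "n \<ge> 1" and s: "s > 0" and lx: "length x = P" and ly: "length y = Q" and nPQ: "n \<le> P + Q"
  shows "exp (s * opt_score S x y) \<le>
     (\<Sum>i\<in>CI n P Q. exp (s * opt_score S (take i x) (take (n - i) y)) * exp (s * opt_score S (drop i x) (drop (n - i) y)))
   + (\<Sum>a\<in>JI n P Q. exp (s * JJ a (n - 1 - a) (take (Suc a) x, take (n - a) y)) * exp (s * opt_score S (drop (Suc a) x) (drop (n - a) y)))"
    (is "_ \<le> ?A + ?B")
proof -
  obtain \<pi> where pi: "\<pi> \<in> alignments (length x) (length y)" and opt: "opt_score S x y = align_score S \<pi> x y"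
    by (rule opt_score_obtain)
  have A0: "0 \<le> ?A" by (intro sum_nonneg) auto
  have B0: "0 \<le> ?B" by (intro sum_nonneg) auto
  show ?thesis
  proof (cases "\<exists>(a, b) \<in> set \<pi>. a + b + 1 = n")
    case True
    then obtain a b where ab: "(a, b) \<in> set \<pi>" "a + b + 1 = n" by auto
    have bnd: "a < P" "b < Q" using pi ab lx ly by (auto simp: alignments_iff)
    have aJ: "a \<in> JI n P Q" using ab bnd by (auto simp: JI_def)
    have b_eq: "b = n - 1 - a" and nb: "n - a = Suc b" using ab by auto
    have jj: "JJ a b (take (Suc a) x, take (Suc b) y) = opt_score S (take a x) (take b y) + S (Some (x ! a)) (Some (y ! b))"
      using bnd lx ly by (simp add: JJ_def min_def)
    have "opt_score S x y \<le> JJ a b (take (Suc a) x, take (Suc b) y) + opt_score S (drop (Suc a) x) (drop (Suc b) y)"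
      unfolding opt jj using jump_opt[OF pi ab(1), of S] by simp
    hence "s * opt_score S x y \<le> s * (JJ a b (take (Suc a) x, take (Suc b) y) + opt_score S (drop (Suc a) x) (drop (Suc b) y))"
      using s by (intro mult_left_mono) auto
    hence "exp (s * opt_score S x y) \<le> exp (s * JJ a b (take (Suc a) x, take (Suc b) y)) * exp (s * opt_score S (drop (Suc a) x) (drop (Suc b) y))"
      by (simp add: distrib_left mult_exp_exp)
    also have "\<dots> = exp (s * JJ a (n - 1 - a) (take (Suc a) x, take (n - a) y)) * exp (s * opt_score S (drop (Suc a) x) (drop (n - a) y))"
      using b_eq nb by simp
    also have "\<dots> \<le> ?B" by (rule member_le_sum[OF aJ _ finite_JI, where f="\<lambda>a. exp (s * JJ a (n - 1 - a) (take (Suc a) x, take (n - a) y)) * exp (s * opt_score S (drop (Suc a) x) (drop (n - a) y))"]) auto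
    finally show ?thesis using A0 by linarith
  next
    case False
    have "\<forall>(a, b) \<in> set \<pi>. a + b + 1 \<noteq> n" using False by auto
    from cut_exists[OF pi _ this] nPQ lx ly obtain i j where ij: "i + j = n" "i \<le> P" "j \<le> Q"
      and cut: "\<forall>(a, b) \<in> set \<pi>. (a < i \<and> b < j) \<or> (i \<le> a \<and> j \<le> b)" by auto
    have iC: "i \<in> CI n P Q" using ij by (auto simp: CI_def)
    have j_eq: "j = n - i" using ij by simp
    have "opt_score S x y \<le> opt_score S (take i x) (take j y) + opt_score S (drop i x) (drop j y)"
      unfolding opt by (rule split_opt[OF pi _ _ cut]) (use ij lx ly in auto)
    hence "s * opt_score S x y \<le> s * (opt_score S (take i x) (take (n - i) y) + opt_score S (drop i x) (drop (n - i) y))"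
      using s j_eq by (intro mult_left_mono) auto
    hence "exp (s * opt_score S x y) \<le> exp (s * opt_score S (take i x) (take (n - i) y)) * exp (s * opt_score S (drop i x) (drop (n - i) y))"
      by (simp add: distrib_left mult_exp_exp)
    also have "\<dots> \<le> ?A" by (rule member_le_sum[OF iC _ finite_CI, where f="\<lambda>i. exp (s * opt_score S (take i x) (take (n - i) y)) * exp (s * opt_score S (drop i x) (drop (n - i) y))"]) auto
    finally show ?thesis using B0 by linarith
  qed
qed

lemma rec_EE:
  assumes n: "n \<ge> 1" and s: "s > 0" and nPQ: "n \<le> P + Q"
  shows "Mexp s P Q \<le>
     (\<Sum>i\<in>CI n P Q. Mexp s i (n - i) * Mexp s (P - i) (Q - (n - i)))
   + (\<Sum>a\<in>JI n P Q. EE (DD (Suc a) (n - a) p) (\<lambda>u. exp (s * JJ a (n - 1 - a) u)) * Mexp s (P - Suc a) (Q - (n - a)))"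
proof -
  let ?F = "\<lambda>v::'a list \<times> 'a list. exp (s * opt_score S (fst v) (snd v))"
  have "Mexp s P Q \<le> EE (DD P Q p) (\<lambda>u.
     (\<Sum>i\<in>CI n P Q. ?F (take i (fst u), take (n - i) (snd u)) * ?F (drop i (fst u), drop (n - i) (snd u)))
   + (\<Sum>a\<in>JI n P Q. (\<lambda>v. exp (s * JJ a (n - 1 - a) v)) (take (Suc a) (fst u), take (n - a) (snd u)) * ?F (drop (Suc a) (fst u), drop (n - a) (snd u))))"
    unfolding Mexp_def
  proof (rule EE_mono[OF finite_DD])
    fix u assume "u \<in> set_pmf (DD P Q p)"
    hence l: "length (fst u) = P" "length (snd u) = Q" by (auto dest: set_DD)
    show "exp (s * opt_score S (fst u) (snd u)) \<le>
     (\<Sum>i\<in>CI n P Q. ?F (take i (fst u), take (n - i) (snd u)) * ?F (drop i (fst u), drop (n - i) (snd u)))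
   + (\<Sum>a\<in>JI n P Q. (\<lambda>v. exp (s * JJ a (n - 1 - a) v)) (take (Suc a) (fst u), take (n - a) (snd u)) * ?F (drop (Suc a) (fst u), drop (n - a) (snd u)))"
      using rec_pointwise[OF n s l nPQ] by simp
  qed
  also have "\<dots> = (\<Sum>i\<in>CI n P Q. EE (DD P Q p) (\<lambda>u. ?F (take i (fst u), take (n - i) (snd u)) * ?F (drop i (fst u), drop (n - i) (snd u))))
   + (\<Sum>a\<in>JI n P Q. EE (DD P Q p) (\<lambda>u. (\<lambda>v. exp (s * JJ a (n - 1 - a) v)) (take (Suc a) (fst u), take (n - a) (snd u)) * ?F (drop (Suc a) (fst u), drop (n - a) (snd u))))"
    by (simp add: EE_add EE_sum finite_DD)
  also have "\<dots> = (\<Sum>i\<in>CI n P Q. Mexp s i (n - i) * Mexp s (P - i) (Q - (n - i)))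
   + (\<Sum>a\<in>JI n P Q. EE (DD (Suc a) (n - a) p) (\<lambda>u. exp (s * JJ a (n - 1 - a) u)) * Mexp s (P - Suc a) (Q - (n - a)))"
  proof (intro arg_cong2[where f="(+)"] sum.cong refl)
    fix i assume "i \<in> CI n P Q"
    hence i: "i \<le> P" "n - i \<le> Q" by (auto simp: CI_def)
    show "EE (DD P Q p) (\<lambda>u. ?F (take i (fst u), take (n - i) (snd u)) * ?F (drop i (fst u), drop (n - i) (snd u)))
        = Mexp s i (n - i) * Mexp s (P - i) (Q - (n - i))"
      unfolding Mexp_def by (rule EE_DD_split[OF i])
  next
    fix a assume "a \<in> JI n P Q"
    hence a: "Suc a \<le> P" "n - a \<le> Q" by (auto simp: JI_def)
    show "EE (DD P Q p) (\<lambda>u. (\<lambda>v. exp (s * JJ a (n - 1 - a) v)) (take (Suc a) (fst u), take (n - a) (snd u)) * ?F (drop (Suc a) (fst u), drop (n - a) (snd u)))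
        = EE (DD (Suc a) (n - a) p) (\<lambda>u. exp (s * JJ a (n - 1 - a) u)) * Mexp s (P - Suc a) (Q - (n - a))"
      unfolding Mexp_def by (rule EE_DD_split[OF a])
  qed
  finally show ?thesis .
qed

end

context lsetup
begin

lemma Mexp_nonneg: "0 \<le> Mexp s P Q"
  unfolding Mexp_def by (rule integral_nonneg_AE) auto

lemma Mexp_00: "Mexp s 0 0 = 1"
  by (simp add: Mexp_def DD_def opt_nil)

lemma main_bound:
  assumes n: "n \<ge> 1" and s: "s > 0"
  shows "\<exists>K>0. \<forall>P Q. Mexp s P Q \<le> K * real (2 * n + 1) powr (real (P + Q) / real n) * exp (real (P + Q) * alpha n s)"
proof -
  define C where "C = real (2 * n + 1)"
  define a where "a = alpha n s"
  define R where "R = (\<lambda>(P, Q). Mexp s P Q / exp (real (P + Q) * a))"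
  define K where "K = Max (R ` {(P, Q). P + Q < n})"
  have fin: "finite {(P, Q). P + Q < n}"
    by (rule finite_subset[of _ "{..<n} \<times> {..<n}"]) auto
  have K_ge: "R (P, Q) \<le> K" if "P + Q < n" for P Q
    unfolding K_def by (rule Max_ge) (use fin that in auto)
  have K_pos: "K > 0" using K_ge[of 0 0] n by (simp add: R_def Mexp_00)
  have C1: "C \<ge> 1" by (simp add: C_def)
  have claim: "\<forall>P Q. P + Q = T \<longrightarrow> Mexp s P Q \<le> K * C powr (real T / real n) * exp (real T * a)" for T
  proof (induction T rule: less_induct)
    case (less T)
    show ?case
    proof (intro allI impI)
      fix P Q assume PQ: "P + Q = T"
      show "Mexp s P Q \<le> K * C powr (real T / real n) * exp (real T * a)"
      proof (cases "T < n")
        case True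
        have "Mexp s P Q = R (P, Q) * exp (real T * a)" unfolding R_def PQ[symmetric] by simp
        also have "\<dots> \<le> K * exp (real T * a)" using K_ge[of P Q] True PQ by (intro mult_right_mono) auto
        also have "\<dots> \<le> K * C powr (real T / real n) * exp (real T * a)"
          using K_pos C1 by (intro mult_right_mono) (auto intro: ge_one_powr_ge_zero)
        finally show ?thesis .
      next
        case False
        hence Tn: "n \<le> T" by simp
        define Z where "Z = K * C powr ((real T - real n) / real n) * exp (real T * a)"
        have Z0: "0 \<le> Z" using K_pos by (simp add: Z_def)
        have A: "Mexp s i (n - i) * Mexp s (P - i) (Q - (n - i)) \<le> Z" if i: "i \<in> CI n P Q" for i
        proof -
          have ii: "i \<le> n" "i \<le> P" "n - i \<le> Q" using i by (auto simp: CI_def)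
          have T': "P - i + (Q - (n - i)) = T - n" using ii PQ by simp
          have "Mexp s i (n - i) \<le> exp (real n * a)" unfolding a_def
            by (rule piece_cut[OF n s]) (use ii in simp)
          moreover have "Mexp s (P - i) (Q - (n - i)) \<le> K * C powr (real (T - n) / real n) * exp (real (T - n) * a)"
            using less.IH[of "T - n"] n Tn T' by auto
          ultimately have "Mexp s i (n - i) * Mexp s (P - i) (Q - (n - i)) \<le> exp (real n * a) * (K * C powr (real (T - n) / real n) * exp (real (T - n) * a))"
            by (intro mult_mono) (auto intro: Mexp_nonneg)
          also have "\<dots> = Z" using Tn by (simp add: Z_def of_nat_diff mult_exp_exp algebra_simps)
          finally show ?thesis .
        qed
        have B: "EE (DD (Suc b) (n - b) p) (\<lambda>u. exp (s * JJ b (n - 1 - b) u)) * Mexp s (P - Suc b) (Q - (n - b)) \<le> Z"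
          if b: "b \<in> JI n P Q" for b
        proof -
          have bb: "b < n" "b < P" "n - 1 - b < Q" using b by (auto simp: JI_def)
          have nb: "n - b = Suc (n - 1 - b)" using bb by simp
          have T': "P - Suc b + (Q - (n - b)) = T - (n + 1)" using bb PQ by simp
          have Tn1: "n + 1 \<le> T" using bb PQ by simp
          have "EE (DD (Suc b) (n - b) p) (\<lambda>u. exp (s * JJ b (n - 1 - b) u)) \<le> exp (real (n + 1) * a)"
            unfolding a_def nb by (rule piece_jump[OF n s]) (use bb in simp)
          moreover have "Mexp s (P - Suc b) (Q - (n - b)) \<le> K * C powr (real (T - (n + 1)) / real n) * exp (real (T - (n + 1)) * a)"
            using less.IH[of "T - (n + 1)"] n Tn T' by auto
          moreover have "0 \<le> EE (DD (Suc b) (n - b) p) (\<lambda>u. exp (s * JJ b (n - 1 - b) u))"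
            by (rule integral_nonneg_AE) auto
          ultimately have "EE (DD (Suc b) (n - b) p) (\<lambda>u. exp (s * JJ b (n - 1 - b) u)) * Mexp s (P - Suc b) (Q - (n - b))
              \<le> exp (real (n + 1) * a) * (K * C powr (real (T - (n + 1)) / real n) * exp (real (T - (n + 1)) * a))"
            by (intro mult_mono) (auto intro: Mexp_nonneg)
          also have "\<dots> \<le> exp (real (n + 1) * a) * (K * C powr ((real T - real n) / real n) * exp (real (T - (n + 1)) * a))"
          proof -
            have "C powr (real (T - (n + 1)) / real n) \<le> C powr ((real T - real n) / real n)"
              using C1 n Tn1 by (intro powr_mono divide_right_mono) (auto simp: of_nat_diff)
            thus ?thesis using K_pos by (intro mult_left_mono mult_right_mono) auto
          qed
          also have "\<dots> = Z"
          proof -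
            have "n + 1 \<le> T" using bb PQ by simp
            hence "real (n + 1) * a + real (T - (n + 1)) * a = real T * a"
              by (simp add: of_nat_diff algebra_simps)
            thus ?thesis by (simp add: Z_def mult_exp_exp algebra_simps)
          qed
          finally show ?thesis .
        qed
        have "Mexp s P Q \<le>
            (\<Sum>i\<in>CI n P Q. Mexp s i (n - i) * Mexp s (P - i) (Q - (n - i)))
          + (\<Sum>b\<in>JI n P Q. EE (DD (Suc b) (n - b) p) (\<lambda>u. exp (s * JJ b (n - 1 - b) u)) * Mexp s (P - Suc b) (Q - (n - b)))"
          by (rule rec_EE[OF n s]) (use PQ Tn in simp)
        also have "\<dots> \<le> (\<Sum>i\<in>CI n P Q. Z) + (\<Sum>b\<in>JI n P Q. Z)"
          by (intro add_mono sum_mono A B)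
        also have "\<dots> = real (card (CI n P Q) + card (JI n P Q)) * Z" by (simp add: algebra_simps)
        also have "\<dots> \<le> C * Z" unfolding C_def using card_CI_JI[of n P Q] Z0 by (intro mult_right_mono) auto
        also have "\<dots> = K * C powr (real T / real n) * exp (real T * a)"
        proof -
          have "C * C powr ((real T - real n) / real n) = C powr (real T / real n)"
            using C1 n by (simp add: powr_add[symmetric] diff_divide_distrib powr_mult_base)
          thus ?thesis by (simp add: Z_def algebra_simps)
        qed
        finally show ?thesis .
      qed
    qed
  qed
  have "\<forall>P Q. Mexp s P Q \<le> K * C powr (real (P + Q) / real n) * exp (real (P + Q) * a)"
    using claim by blast
  thus ?thesis using K_pos unfolding C_def a_def by blast
qed

end

context lsetup
begin

definition lam :: "nat \<Rightarrow> real" where "lam N = ff N N / real N"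

lemma lambda_N_bound:
  assumes n: "n \<ge> 1" and s: "s > 0"
  shows "\<exists>K>0. \<forall>N\<ge>1. lam N \<le> lam n + s * (delta_norm S)\<^sup>2 / 4 + 2 * ln (real (2 * n + 1)) / (s * real n) + ln K / (s * real N)"
proof -
  obtain K where K: "K > 0" and bd: "\<And>P Q. Mexp s P Q \<le> K * real (2 * n + 1) powr (real (P + Q) / real n) * exp (real (P + Q) * alpha n s)"
    using main_bound[OF n s] by blast
  define C where "C = real (2 * n + 1)"
  have C1: "C \<ge> 1" by (simp add: C_def)
  have "lam N \<le> lam n + s * (delta_norm S)\<^sup>2 / 4 + 2 * ln C / (s * real n) + ln K / (s * real N)" if N: "N \<ge> 1" for N
  proof -
    have "exp (s * ff N N) \<le> Mexp s N N"
    proof -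
      have "ff N N = EE (DD N N p) (\<lambda>u. opt_score S (fst u) (snd u))" by (simp add: ff_def case_prod_unfold)
      thus ?thesis unfolding Mexp_def using jensen_exp[OF finite_DD[of N N p], where s=s and f="\<lambda>u. opt_score S (fst u) (snd u)"] by simp
    qed
    also have "\<dots> \<le> K * C powr (real (N + N) / real n) * exp (real (N + N) * alpha n s)"
      unfolding C_def by (rule bd)
    finally have e: "exp (s * ff N N) \<le> K * C powr (real (N + N) / real n) * exp (real (N + N) * alpha n s)" .
    have "s * ff N N = ln (exp (s * ff N N))" by simp
    also have "\<dots> \<le> ln (K * C powr (real (N + N) / real n) * exp (real (N + N) * alpha n s))"
      using e K C1 by (subst ln_le_cancel_iff) auto
    also have "\<dots> = ln K + (real (N + N) / real n) * ln C + real (N + N) * alpha n s"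
      using K C1 by (simp add: ln_mult ln_powr)
    finally have h: "s * ff N N \<le> ln K + (real (N + N) / real n) * ln C + real (N + N) * alpha n s" .
    have "lam N = (s * ff N N) / (s * real N)" using s N by (simp add: lam_def)
    also have "\<dots> \<le> (ln K + (real (N + N) / real n) * ln C + real (N + N) * alpha n s) / (s * real N)"
      using h s N by (intro divide_right_mono) auto
    also have "\<dots> = lam n + s * (delta_norm S)\<^sup>2 / 4 + 2 * ln C / (s * real n) + ln K / (s * real N)"
      using s N n by (simp add: alpha_def lam_def field_simps power2_eq_square)
    finally show ?thesis .
  qed
  thus ?thesis using K unfolding C_def by blast
qed

lemma ff_iter: "real q * ff m m + ff r r \<le> ff (q * m + r) (q * m + r)"
proof (induction q)
  case 0 thus ?case by simp
next
  case (Suc q)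
  have "ff m m + ff (q * m + r) (q * m + r) \<le> ff (m + (q * m + r)) (m + (q * m + r))" by (rule ff_superadd)
  thus ?case using Suc by (simp add: algebra_simps)
qed

lemma lam_lower:
  assumes m: "m \<ge> 1"
  shows "\<exists>c. \<forall>N\<ge>1. lam m - c / real N \<le> lam N"
proof -
  define c0 where "c0 = Min ((\<lambda>r. ff r r) ` {..<m})"
  have c0: "c0 \<le> ff r r" if "r < m" for r unfolding c0_def by (rule Min_le) (use that in auto)
  define c where "c = real m * \<bar>lam m\<bar> + \<bar>c0\<bar>"
  have "lam m - c / real N \<le> lam N" if N: "N \<ge> 1" for N
  proof -
    define q where "q = N div m"
    define r where "r = N mod m"
    have Nqr: "N = q * m + r" by (simp add: q_def r_def)
    have r: "r < m" using m by (simp add: r_def)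
    have qm: "real q * real m \<le> real N" "real N - real m \<le> real q * real m"
    proof -
      show "real q * real m \<le> real N" using Nqr by (simp flip: of_nat_mult)
      have "N < q * m + m" using Nqr r by simp
      thus "real N - real m \<le> real q * real m" by (simp flip: of_nat_mult of_nat_add)
    qed
    have ffm: "ff m m = real m * lam m" using m by (simp add: lam_def)
    have "real N * lam m - real m * \<bar>lam m\<bar> \<le> real q * ff m m"
    proof (cases "lam m \<ge> 0")
      case True
      have "real N * lam m - real m * \<bar>lam m\<bar> = (real N - real m) * lam m" using True by (simp add: algebra_simps)
      also have "\<dots> \<le> (real q * real m) * lam m" using qm True by (intro mult_right_mono) auto
      finally show ?thesis by (simp add: ffm)
    next
      case False
      have "real N * lam m - real m * \<bar>lam m\<bar> \<le> real N * lam m" by simp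
      also have "\<dots> \<le> (real q * real m) * lam m" using qm False by (intro mult_right_mono_neg) auto
      finally show ?thesis by (simp add: ffm)
    qed
    hence "real N * lam m - c \<le> real q * ff m m + ff r r" using c0[OF r] by (simp add: c_def)
    also have "\<dots> \<le> ff N N" using ff_iter[of q m r] Nqr by simp
    also have "\<dots> = real N * lam N" using N by (simp add: lam_def)
    finally have "real N * lam m - c \<le> real N * lam N" .
    thus ?thesis using N by (simp add: field_simps)
  qed
  thus ?thesis by blast
qed

end

context lsetup
begin

lemma lam_bdd: "\<exists>B. \<forall>N\<ge>1. lam N \<le> B"
proof -
  obtain K where K: "K > 0" and bd: "\<forall>N\<ge>1. lam N \<le> lam 1 + 1 * (delta_norm S)\<^sup>2 / 4 + 2 * ln (real (2 * 1 + 1)) / (1 * real 1) + ln K / (1 * real N)"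
    using lambda_N_bound[of 1 1] by auto
  have "lam N \<le> lam 1 + (delta_norm S)\<^sup>2 / 4 + 2 * ln 3 + \<bar>ln K\<bar>" if N: "N \<ge> 1" for N
  proof -
    have "ln K / real N \<le> \<bar>ln K\<bar>"
    proof -
      have "ln K / real N \<le> \<bar>ln K\<bar> / real N" using N by (intro divide_right_mono) auto
      also have "\<dots> \<le> \<bar>ln K\<bar>"
      proof -
        have "\<bar>ln K\<bar> * 1 \<le> \<bar>ln K\<bar> * real N" using N by (intro mult_left_mono) auto
        thus ?thesis using N by (simp add: divide_le_eq)
      qed
      finally show ?thesis .
    qed
    thus ?thesis using bd N by fastforce
  qed
  thus ?thesis by blast
qed

definition uu :: real where "uu = Sup (lam ` {1..})"

lemma bdd_lam: "bdd_above (lam ` {1..})"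
  using lam_bdd by (auto simp: bdd_above_def)

lemma lam_le_uu: "N \<ge> 1 \<Longrightarrow> lam N \<le> uu"
  unfolding uu_def by (rule cSup_upper) (use bdd_lam in auto)

lemma lam_tendsto: "lam \<longlonglongrightarrow> uu"
proof (rule LIMSEQ_I)
  fix r :: real assume r: "r > 0"
  have "uu - r / 2 < uu" using r by simp
  then obtain m where m: "m \<ge> 1" "uu - r / 2 < lam m"
    unfolding uu_def using less_cSup_iff[of "lam ` {1..}" "Sup (lam ` {1..}) - r / 2"] bdd_lam by auto
  obtain c where c: "\<And>N. N \<ge> 1 \<Longrightarrow> lam m - c / real N \<le> lam N" using lam_lower[OF m(1)] by blast
  define no where "no = max 1 (nat \<lceil>2 * \<bar>c\<bar> / r\<rceil> + 1)"
  show "\<exists>no. \<forall>N\<ge>no. norm (lam N - uu) < r"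
  proof (intro exI allI impI)
    fix N assume N: "N \<ge> no"
    hence N1: "N \<ge> 1" by (simp add: no_def)
    have "real N > 2 * \<bar>c\<bar> / r"
    proof -
      have "nat \<lceil>2 * \<bar>c\<bar> / r\<rceil> + 1 \<le> N" using N by (simp add: no_def)
      hence "real (nat \<lceil>2 * \<bar>c\<bar> / r\<rceil>) + 1 \<le> real N" by linarith
      moreover have "2 * \<bar>c\<bar> / r \<le> real (nat \<lceil>2 * \<bar>c\<bar> / r\<rceil>)" by linarith
      ultimately show ?thesis by linarith
    qed
    hence "2 * \<bar>c\<bar> < r * real N" using r by (simp add: field_simps)
    hence "c / real N < r / 2" using N1 r by (simp add: field_simps)
    hence "uu - r < lam N" using c[OF N1] m(2) by linarith
    moreover have "lam N \<le> uu" by (rule lam_le_uu[OF N1])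
    ultimately show "norm (lam N - uu) < r" using r by simp
  qed
qed

lemma lim_eq: "lambda_lim p S = uu"
proof -
  have "(\<lambda>n. lambda_n p S n) = lam" by (rule ext) (simp add: lambda_n_ff lam_def)
  thus ?thesis unfolding lambda_lim_def using lam_tendsto by (simp add: limI)
qed

lemma upper_s:
  assumes n: "n \<ge> 1" and s: "s > 0"
  shows "uu \<le> lam n + s * (delta_norm S)\<^sup>2 / 4 + 2 * ln (real (2 * n + 1)) / (s * real n)"
proof -
  define B where "B = lam n + s * (delta_norm S)\<^sup>2 / 4 + 2 * ln (real (2 * n + 1)) / (s * real n)"
  obtain K where K: "K > 0" and bd: "\<forall>N\<ge>1. lam N \<le> B + ln K / (s * real N)"
    using lambda_N_bound[OF n s] unfolding B_def by blast
  have "(\<lambda>N. B + (ln K / s) / real N) \<longlonglongrightarrow> B + 0"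
    by (intro tendsto_add tendsto_const lim_const_over_n)
  hence t: "(\<lambda>N. B + (ln K / s) / real N) \<longlonglongrightarrow> B" by simp
  have "uu \<le> B"
  proof (rule LIMSEQ_le[OF lam_tendsto t])
    show "\<exists>N. \<forall>m\<ge>N. lam m \<le> B + ln K / s / real m" using bd by (auto intro!: exI[of _ 1])
  qed
  thus ?thesis by (simp add: B_def)
qed

lemma delta_nonneg: "0 \<le> delta_norm S"
  using delta_ge[of S None None None] by simp

lemma sup_nonneg: "0 \<le> sup_norm S"
  using sup_ge[of S None None] by simp

lemma upper_final:
  assumes n: "n \<ge> 1"
  shows "uu \<le> lam n + delta_norm S * sqrt (2 * ln (real (2 * n + 1)) / real n)"
proof -
  define L where "L = ln (real (2 * n + 1))"
  define d where "d = delta_norm S"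
  have L: "L > 0" using n by (simp add: L_def)
  have d: "d \<ge> 0" by (simp add: d_def delta_nonneg)
  show ?thesis
  proof (cases "d = 0")
    case True
    have "uu \<le> lam n"
    proof (rule ccontr)
      assume "\<not> uu \<le> lam n"
      hence g: "uu - lam n > 0" by simp
      define s where "s = 4 * L / (real n * (uu - lam n))"
      have s: "s > 0" using g L n by (simp add: s_def)
      have "uu \<le> lam n + s * d\<^sup>2 / 4 + 2 * L / (s * real n)"
        using upper_s[OF n s] by (simp add: L_def d_def)
      also have "\<dots> = lam n + (uu - lam n) / 2" using True g L n by (simp add: s_def field_simps)
      finally show False using g by (simp add: field_simps)
    qed
    thus ?thesis using True by (simp add: d_def)
  next
    case False
    hence d0: "d > 0" using d by simp
    define w where "w = sqrt (8 * L / real n)"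
    have w: "w > 0" using L n by (simp add: w_def)
    have w2: "w\<^sup>2 = 8 * L / real n" using L n by (simp add: w_def)
    define s where "s = w / d"
    have s: "s > 0" using w d0 by (simp add: s_def)
    have u1: "uu \<le> lam n + s * d\<^sup>2 / 4 + 2 * L / (s * real n)"
      using upper_s[OF n s] by (simp add: L_def d_def)
    have e1: "s * d\<^sup>2 / 4 + 2 * L / (s * real n) = d * (w / 2)"
    proof -
      have "2 * L / real n = w\<^sup>2 / 4" using w2 by simp
      hence "2 * L / (s * real n) = d * w / 4" using w d0 n by (simp add: s_def field_simps power2_eq_square)
      moreover have "s * d\<^sup>2 / 4 = d * w / 4" using d0 by (simp add: s_def power2_eq_square)
      ultimately show ?thesis by simp
    qed
    have e2: "w / 2 = sqrt (2 * L / real n)"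
    proof -
      have "8 * L / real n = 4 * (2 * L / real n)" by simp
      hence "w = sqrt 4 * sqrt (2 * L / real n)" unfolding w_def by (simp only: real_sqrt_mult)
      thus "w / 2 = sqrt (2 * L / real n)" by (simp add: real_sqrt_four)
    qed
    have "lam n + s * d\<^sup>2 / 4 + 2 * L / (s * real n) = lam n + (s * d\<^sup>2 / 4 + 2 * L / (s * real n))" by simp
    also have "\<dots> = lam n + d * sqrt (2 * L / real n)" unfolding e1 e2 ..
    finally show ?thesis using u1 by (simp add: L_def d_def)
  qed
qed

end

theorem mainTheorem9:
  fixes p :: "'a::finite pmf"
    and S :: "'a option \<Rightarrow> 'a option \<Rightarrow> real"
    and n :: nat
  assumes sym: "\<And>c d. S c d = S d c"
    and n2: "n \<ge> 2"
  shows "lambda_n p S n \<le> lambda_lim p S \<and>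
         lambda_lim p S \<le> lambda_n p S n
           + sqrt ((2 * ln 3 + 2 * ln (real n + 2)) / ln (real n)) * delta_norm S
               * sqrt (ln (real n)) / sqrt (real n)
           + 2 * sup_norm S / real n"
proof -
  interpret L: lsetup p S by unfold_locales (rule sym)
  have n1: "n \<ge> 1" using n2 by simp
  have ln_eq: "lambda_n p S n = L.lam n" by (simp add: L.lambda_n_ff L.lam_def)
  have lim: "lambda_lim p S = L.uu" by (rule L.lim_eq)
  have part1: "lambda_n p S n \<le> lambda_lim p S"
    unfolding ln_eq lim by (rule L.lam_le_uu[OF n1])
  have up: "L.uu \<le> L.lam n + delta_norm S * sqrt (2 * ln (real (2 * n + 1)) / real n)"
    by (rule L.upper_final[OF n1])
  have lnn: "ln (real n) > 0" using n2 by simp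
  have key: "delta_norm S * sqrt (2 * ln (real (2 * n + 1)) / real n)
      \<le> sqrt ((2 * ln 3 + 2 * ln (real n + 2)) / ln (real n)) * delta_norm S * sqrt (ln (real n)) / sqrt (real n)"
  proof -
    have "sqrt ((2 * ln 3 + 2 * ln (real n + 2)) / ln (real n)) * sqrt (ln (real n)) = sqrt (2 * ln 3 + 2 * ln (real n + 2))"
      using lnn by (simp add: real_sqrt_mult[symmetric])
    hence r: "sqrt ((2 * ln 3 + 2 * ln (real n + 2)) / ln (real n)) * delta_norm S * sqrt (ln (real n)) / sqrt (real n)
        = delta_norm S * sqrt ((2 * ln 3 + 2 * ln (real n + 2)) / real n)"
      using lnn by (simp add: real_sqrt_divide algebra_simps)
    have "ln (real (2 * n + 1)) \<le> ln 3 + ln (real n + 2)"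
    proof -
      have "ln (3 * (real n + 2)) = ln 3 + ln (real n + 2)" by (rule ln_mult_pos) auto
      hence "ln 3 + ln (real n + 2) = ln (3 * (real n + 2))" by simp
      moreover have "ln (real (2 * n + 1)) \<le> ln (3 * (real n + 2))" by simp
      ultimately show ?thesis by simp
    qed
    hence "2 * ln (real (2 * n + 1)) / real n \<le> (2 * ln 3 + 2 * ln (real n + 2)) / real n"
      using n1 by (intro divide_right_mono) auto
    hence "sqrt (2 * ln (real (2 * n + 1)) / real n) \<le> sqrt ((2 * ln 3 + 2 * ln (real n + 2)) / real n)"
      by simp
    hence "delta_norm S * sqrt (2 * ln (real (2 * n + 1)) / real n) \<le> delta_norm S * sqrt ((2 * ln 3 + 2 * ln (real n + 2)) / real n)"
      using L.delta_nonneg by (intro mult_left_mono) auto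
    thus ?thesis using r by simp
  qed
  have "0 \<le> 2 * sup_norm S / real n" using L.sup_nonneg by simp
  hence part2: "lambda_lim p S \<le> lambda_n p S n
           + sqrt ((2 * ln 3 + 2 * ln (real n + 2)) / ln (real n)) * delta_norm S
               * sqrt (ln (real n)) / sqrt (real n)
           + 2 * sup_norm S / real n"
    unfolding ln_eq lim using up key by linarith
  show ?thesis using part1 part2 by blast
qed

end
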